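(* Consider two distinct regions $A$ and $B$ containing $N_A$ and $N_B$ voxels. For each voxel $i$ of $A$ the observed variable is $Y_i^A = X_i^A + \epsilon_i^A$ (latent signal plus noise), and similarly $Y_j^B = X_j^B+\epsilon_j^B$ for voxels $j$ of $B$. Assume $\mathrm{Var}(X_i^A)=\sigma_A^2>0$, $\mathrm{Var}(\epsilon_i^A)=\gamma_A^2$ for all $i$, and $\mathrm{Var}(X_j^B)=\sigma_B^2>0$, $\mathrm{Var}(\epsilon_j^B)=\gamma_B^2$ for all $j$; the noise variables are uncorrelated with each other (within and across regions) and uncorrelated with all latent variables; $\eta^A_{i,i'}=\mathrm{Cor}(X_i^A,X_{i'}^A)$ and $\eta^B_{j,j'}=\mathrm{Cor}(X_j^B,X_{j'}^B)$ denote the (arbitrary) latent intra-correlations; and $\mathrm{Cor}(X_i^A,X_j^B)=\rho^{A,B}$ for all $i,j$. Suppose one observes $n$ i.i.d. (over $t=1,\dots,n$) copies $Y_i^A(t)$, $Y_j^B(t)$ of the whole vector of observed variables, so in particular $\mathrm{Cov}(Y_i^A(t),Y_j^B(t))=\rho^{A,B}\sigma_A\sigma_B$, and write $\mathbf{Y}_i^A=(Y_i^A(1),\dots,Y_i^A(n))$. Fix nonempty sets of voxels (clusters) $\nu_A$ in $A$ and $\nu_B$ in $B$, and define $\overline{\mathbf{Y}}^{\nu_A}=|\nu_A|^{-1}\sum_{i\in\nu_A}\mathbf{Y}_i^A$, $\overline{\mathbf{Y}}^{\nu_B}=|\nu_B|^{-1}\sum_{j\in\nu_B}\mathbf{Y}_j^B$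 and $r^{CLA}_{\nu_A,\nu_B}=\widehat{Cor}(\overline{\mathbf{Y}}^{\nu_A},\overline{\mathbf{Y}}^{\nu_B})$. Then, as $n\to\infty$, $$r^{CLA}_{\nu_A,\nu_B}\xrightarrow{a.s.}\rho^{CLA}_{\nu_A,\nu_B}:=\frac{\rho^{A,B}}{\sqrt{\left[\frac{1}{|\nu_A|^2}\sum_{i,i'\in\nu_A}\eta^A_{i,i'}+\frac{\gamma_A^2}{|\nu_A|\sigma_A^2}\right]\left[\frac{1}{|\nu_B|^2}\sum_{j,j'\in\nu_B}\eta^B_{j,j'}+\frac{\gamma_B^2}{|\nu_B|\sigma_B^2}\right]}}.$$
   Context: Sample correlation: for $\mathbf{a},\mathbf{b}\in\mathbb{R}^n$ with means $\bar a,\bar b$, let $\mathbf{a}^c=\mathbf{a}-\bar a\mathbf{1}_n$, $\mathbf{b}^c=\mathbf{b}-\bar b\mathbf{1}_n$; $\widehat{Cov}(\mathbf{a},\mathbf{b})=n^{-1}\langle\mathbf{a}^c,\mathbf{b}^c\rangle$, $\widehat{Var}(\mathbf{a})=n^{-1}\|\mathbf{a}^c\|^2$, $\widehat{Cor}(\mathbf{a},\mathbf{b})=\widehat{Cov}(\mathbf{a},\mathbf{b})/\sqrt{\widehat{Var}(\mathbf{a})\widehat{Var}(\mathbf{b})}$. All variables have finite second moments. *)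

theory Defs
  imports "HOL-Probability.Probability"
begin

definition pcov :: "'a measure \<Rightarrow> ('a \<Rightarrow> real) \<Rightarrow> ('a \<Rightarrow> real) \<Rightarrow> real" where
  "pcov M X Y = (\<integral>\<omega>. (X \<omega> - (\<integral>x. X x \<partial>M)) * (Y \<omega> - (\<integral>x. Y x \<partial>M)) \<partial>M)"

definition pvar :: "'a measure \<Rightarrow> ('a \<Rightarrow> real) \<Rightarrow> real" where
  "pvar M X = pcov M X X"

definition pcor :: "'a measure \<Rightarrow> ('a \<Rightarrow> real) \<Rightarrow> ('a \<Rightarrow> real) \<Rightarrow> real" where
  "pcor M X Y = pcov M X Y / sqrt (pvar M X * pvar M Y)"

definition smean :: "nat \<Rightarrow> (nat \<Rightarrow> real) \<Rightarrow> real" where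
  "smean n a = (\<Sum>t<n. a t) / real n"

definition scov :: "nat \<Rightarrow> (nat \<Rightarrow> real) \<Rightarrow> (nat \<Rightarrow> real) \<Rightarrow> real" where
  "scov n a b = (\<Sum>t<n. (a t - smean n a) * (b t - smean n b)) / real n"

definition svar :: "nat \<Rightarrow> (nat \<Rightarrow> real) \<Rightarrow> real" where
  "svar n a = (\<Sum>t<n. (a t - smean n a)^2) / real n"

definition scor :: "nat \<Rightarrow> (nat \<Rightarrow> real) \<Rightarrow> (nat \<Rightarrow> real) \<Rightarrow> real" where
  "scor n a b = scov n a b / sqrt (svar n a * svar n b)"

text \<open>The whole observed vector at time t, indexed by voxels Inl i of A and Inr j of B.\<close>
definition obsvec :: "nat \<Rightarrow> nat \<Rightarrow> (nat \<Rightarrow> 'a \<Rightarrow> real) \<Rightarrow> (nat \<Rightarrow> 'a \<Rightarrow> real)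
    \<Rightarrow> 'a \<Rightarrow> (nat + nat \<Rightarrow> real)" where
  "obsvec NA NB YA YB \<omega> = (\<lambda>k\<in>{..<NA} <+> {..<NB}. case k of Inl i \<Rightarrow> YA i \<omega> | Inr j \<Rightarrow> YB j \<omega>)"

end

theory Submission
  imports Defs
begin


lemma cesaro:
  fixes a :: "nat \<Rightarrow> real"
  assumes "a \<longlonglongrightarrow> L"
  shows "(\<lambda>n. (\<Sum>k<n. a k) / real n) \<longlonglongrightarrow> L"
proof (rule LIMSEQ_I)
  fix r :: real assume r: "0 < r"
  from LIMSEQ_D[OF assms, of "r/2"] r obtain N where N: "\<And>k. k \<ge> N \<Longrightarrow> norm (a k - L) < r/2" by auto
  define C where "C = (\<Sum>k<N. \<bar>a k - L\<bar>)"
  have C0: "C \<ge> 0" unfolding C_def by (auto intro: sum_nonneg)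
  obtain N2 :: nat where N2: "real N2 > 2 * C / r" using reals_Archimedean2 by blast
  show "\<exists>no. \<forall>n\<ge>no. norm ((\<Sum>k<n. a k) / real n - L) < r"
  proof (intro exI[of _ "Suc (N + N2)"] allI impI)
    fix n assume n: "Suc (N + N2) \<le> n"
    hence npos: "real n > 0" by simp
    have "(\<Sum>k<n. a k) / real n - L = (\<Sum>k<n. a k - L) / real n"
      using npos by (simp add: sum_subtractf field_simps)
    also have "(\<Sum>k<n. a k - L) = (\<Sum>k<N. a k - L) + (\<Sum>k\<in>{N..<n}. a k - L)"
      using n by (simp add: lessThan_atLeast0 sum.atLeastLessThan_concat)
    finally have eq: "(\<Sum>k<n. a k) / real n - L = ((\<Sum>k<N. a k - L) + (\<Sum>k\<in>{N..<n}. a k - L)) / real n" .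
    have b1: "\<bar>\<Sum>k<N. a k - L\<bar> \<le> C" unfolding C_def by (rule sum_abs)
    have "\<bar>\<Sum>k\<in>{N..<n}. a k - L\<bar> \<le> (\<Sum>k\<in>{N..<n}. \<bar>a k - L\<bar>)" by (rule sum_abs)
    also have "\<dots> \<le> (\<Sum>k\<in>{N..<n}. r/2)" using N by (intro sum_mono) (simp add: less_imp_le)
    also have "\<dots> \<le> real n * (r/2)" using r by simp
    finally have b2: "\<bar>\<Sum>k\<in>{N..<n}. a k - L\<bar> \<le> real n * (r/2)" .
    have "C < real n * (r/2)"
    proof -
      have "real n > 2 * C / r" using N2 n by linarith
      thus ?thesis using r by (simp add: field_simps)
    qed
    hence "\<bar>(\<Sum>k<N. a k - L) + (\<Sum>k\<in>{N..<n}. a k - L)\<bar> < real n * r" using b1 b2 by linarith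
    thus "norm ((\<Sum>k<n. a k) / real n - L) < r" unfolding eq using npos
      by (simp add: abs_divide field_simps)
  qed
qed

lemma count_le:
  fixes x :: real assumes "x \<ge> 0"
  shows "(\<Sum>k<K. if x > real (Suc k) then 1 else 0) \<le> min x (real K)"
proof (induction K)
  case 0 then show ?case using assms by simp
next
  case (Suc K) then show ?case by (auto simp: min_def split: if_splits)
qed




definition kk :: "real \<Rightarrow> nat \<Rightarrow> nat" where "kk a m = nat \<lceil>a ^ m\<rceil>"

lemma kk_eq: "a > 1 \<Longrightarrow> real (kk a m) = real_of_int \<lceil>a ^ m\<rceil>"
proof -
  assume a: "a > 1"
  have "1 \<le> a ^ m" using a by simp
  hence "0 \<le> \<lceil>a ^ m\<rceil>" by (simp add: zero_le_ceiling)
  thus ?thesis unfolding kk_def by simp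
qed

lemma kk_ge: "a > 1 \<Longrightarrow> a ^ m \<le> real (kk a m)"
  using kk_eq[of a m] le_of_int_ceiling[of "a ^ m"] by simp

lemma kk_lt: "a > 1 \<Longrightarrow> real (kk a m) < a ^ m + 1"
  using kk_eq[of a m] of_int_ceiling_le_add_one[of "a ^ m"] ceiling_correct[of "a ^ m"] by linarith

lemma kk_pos: "a > 1 \<Longrightarrow> 1 \<le> kk a m"
proof -
  assume a: "a > 1"
  have "1 \<le> a ^ m" using a by simp
  also have "\<dots> \<le> real (kk a m)" by (rule kk_ge[OF a])
  finally show ?thesis by simp
qed

lemma kk_mono: "a > 1 \<Longrightarrow> m \<le> m' \<Longrightarrow> kk a m \<le> kk a m'"
  unfolding kk_def by (intro nat_mono ceiling_mono power_increasing) auto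

lemma kk_unbounded: "a > 1 \<Longrightarrow> \<exists>m. real N < real (kk a m)"
proof -
  assume a: "a > 1"
  obtain m where "real N < a ^ m" using real_arch_pow[OF a] by blast
  thus ?thesis using kk_ge[OF a, of m] by (intro exI[of _ m]) linarith
qed

lemma kk_filterlim: "a > 1 \<Longrightarrow> filterlim (kk a) at_top sequentially"
proof -
  assume a: "a > 1"
  show ?thesis unfolding filterlim_at_top
  proof
    fix N :: nat
    obtain m where m: "real N < real (kk a m)" using kk_unbounded[OF a] by blast
    show "eventually (\<lambda>n. N \<le> kk a n) sequentially"
      unfolding eventually_sequentially
      using m kk_mono[OF a] by (intro exI[of _ m]) (smt (verit) of_nat_le_iff order_trans)
  qed
qed

lemma kk_ratio: "a > 1 \<Longrightarrow> real (kk a (Suc m)) / real (kk a m) \<le> a + 1 / a ^ m"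
proof -
  assume a: "a > 1"
  have p: "0 < a ^ m" using a by simp
  have "real (kk a (Suc m)) / real (kk a m) \<le> (a ^ Suc m + 1) / a ^ m"
    using kk_lt[OF a, of "Suc m"] kk_ge[OF a, of m] p
    by (intro frac_le) auto
  also have "\<dots> = a + 1 / a ^ m" using p by (auto simp: add_divide_distrib)
  finally show ?thesis .
qed

lemma geom_tail:
  fixes r z :: real
  assumes r: "0 < r" "r < 1" and z: "z > 0"
  shows "(\<Sum>m<M. if r^m < z then r^m else 0) \<le> max 0 (z - r^M) / (1 - r)"
proof (induction M)
  case 0 then show ?case using r by simp
next
  case (Suc M)
  show ?case
  proof (cases "r^M < z")
    case True
    have "(\<Sum>m<Suc M. if r^m < z then r^m else 0) = (\<Sum>m<M. if r^m < z then r^m else 0) + r^M"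
      using True by simp
    also have "\<dots> \<le> (z - r^M)/(1-r) + r^M" using Suc True by simp
    also have "\<dots> = (z - r^Suc M)/(1-r)" using r by (simp add: field_simps)
    also have "\<dots> \<le> max 0 (z - r^Suc M)/(1-r)" using r by (intro divide_right_mono) auto
    finally show ?thesis .
  next
    case False
    have "(\<Sum>m<M. if r^m < z then r^m else 0) \<le> 0" using Suc False r by (simp add: max_def split: if_splits)
    hence "(\<Sum>m<Suc M. if r^m < z then r^m else 0) \<le> 0" using False by simp
    also have "0 \<le> max 0 (z - r^Suc M)/(1-r)" using r by simp
    finally show ?thesis .
  qed
qed

definition psi :: "nat \<Rightarrow> real \<Rightarrow> real" where "psi n x = (if x \<le> real n then x^2 else 0)"

lemma psi_sum_bound:
  assumes a: "a > 1" and x: "x \<ge> 0"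
  shows "(\<Sum>m<M. psi (kk a m) x / real (kk a m)) \<le> 2 * a / (a - 1) * x"
proof (cases "x = 0")
  case True thus ?thesis by (simp add: psi_def)
next
  case False
  hence xp: "x > 0" using x by simp
  define r where "r = 1 / a"
  have r: "0 < r" "r < 1" using a unfolding r_def by auto
  have trm: "psi (kk a m) x / real (kk a m) \<le> x^2 * (if r^m < 2/x then r^m else 0)" for m
  proof (cases "x \<le> real (kk a m)")
    case True
    have ge: "a ^ m \<le> real (kk a m)" by (rule kk_ge[OF a])
    have am: "1 \<le> a ^ m" using a by simp
    have "x < a ^ m + 1" using True kk_lt[OF a, of m] by linarith
    hence "x < 2 * a ^ m" using am by linarith
    hence lt: "r ^ m < 2 / x" unfolding r_def using xp am by (simp add: power_one_over field_simps)
    have "1 / real (kk a m) \<le> r ^ m" unfolding r_def power_one_over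
      using ge am by (intro divide_left_mono) auto
    hence "x^2 / real (kk a m) \<le> x^2 * r^m"
      using mult_left_mono[of "1 / real (kk a m)" "r^m" "x^2"] by simp
    thus ?thesis using True lt by (simp add: psi_def)
  next
    case False
    thus ?thesis using r by (simp add: psi_def)
  qed
  have "(\<Sum>m<M. psi (kk a m) x / real (kk a m)) \<le> (\<Sum>m<M. x^2 * (if r^m < 2/x then r^m else 0))"
    by (intro sum_mono trm)
  also have "\<dots> = x^2 * (\<Sum>m<M. if r^m < 2/x then r^m else 0)" by (simp add: sum_distrib_left)
  also have "\<dots> \<le> x^2 * (max 0 (2/x - r^M) / (1 - r))"
    by (intro mult_left_mono geom_tail r) (use xp in auto)
  also have "\<dots> \<le> x^2 * ((2/x) / (1 - r))"
    using r xp by (intro mult_left_mono divide_right_mono) auto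
  also have "\<dots> = 2 * a / (a - 1) * x" unfolding r_def using a xp by (simp add: field_simps power2_eq_square)
  finally show ?thesis .
qed

lemma interp_arith:
  fixes \<mu> \<gamma> \<delta> \<rho> U L v \<epsilon> :: real
  assumes mu: "0 \<le> \<mu>" and g: "0 < \<gamma>" "\<gamma> \<le> 1" and ge: "\<gamma> * (\<mu> + 2) \<le> \<epsilon> / 2"
    and d: "0 < \<delta>" "\<delta> \<le> \<gamma>"
    and rho: "1 \<le> \<rho>" "\<rho> \<le> 1 + \<gamma>" and U: "0 \<le> U" "U < \<mu> + \<delta>" and L: "0 \<le> L" "\<mu> - \<delta> < L"
    and v: "L / \<rho> \<le> v" "v \<le> U * \<rho>" and e: "0 < \<epsilon>"
  shows "\<bar>v - \<mu>\<bar> < \<epsilon>"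
proof -
  have g1: "\<gamma> * (1 + \<mu>) \<le> \<gamma> * (\<mu> + 2)" using g by (intro mult_left_mono) auto
  have "U * \<rho> \<le> (\<mu> + \<gamma>) * (1 + \<gamma>)"
    using U d rho by (intro mult_mono) auto
  also have "\<dots> = \<mu> + \<gamma> * (1 + \<mu> + \<gamma>)" by (simp add: algebra_simps)
  also have "\<dots> \<le> \<mu> + \<gamma> * (\<mu> + 2)" using g by (intro add_left_mono mult_left_mono) auto
  finally have "U * \<rho> \<le> \<mu> + \<gamma> * (\<mu> + 2)" .
  hence up: "v < \<mu> + \<epsilon>" using v(2) ge e by linarith
  have Lr: "0 \<le> L / \<rho>" using L rho by simp
  have low: "v > \<mu> - \<epsilon>"
  proof (cases "\<mu> - \<gamma> \<ge> 0")
    case False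
    have "\<gamma> \<le> \<gamma> * (\<mu> + 2)" using g mu by (simp add: algebra_simps)
    thus ?thesis using False Lr v(1) ge e by linarith
  next
    case True
    have "(\<mu> - \<gamma>) / (1 + \<gamma>) \<le> L / \<rho>"
      using True L d rho g by (intro frac_le) auto
    moreover have "(\<mu> - \<gamma>) / (1 + \<gamma>) \<ge> \<mu> - \<gamma> * (1 + \<mu>)"
    proof -
      have "(\<mu> - \<gamma> * (1 + \<mu>)) * (1 + \<gamma>) = \<mu> - \<gamma> - \<gamma>^2 * (1 + \<mu>)" by (simp add: algebra_simps power2_eq_square)
      also have "\<dots> \<le> \<mu> - \<gamma>" using mu by simp
      finally have "(\<mu> - \<gamma> * (1 + \<mu>)) * (1 + \<gamma>) \<le> \<mu> - \<gamma>" .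
      thus ?thesis using g by (simp add: field_simps)
    qed
    ultimately show ?thesis using g1 ge e v(1) by linarith
  qed
  show ?thesis using up low by linarith
qed

lemma kk0: "kk a 0 = 1" unfolding kk_def by simp

lemma interp:
  fixes s :: "nat \<Rightarrow> real"
  assumes mono: "\<And>n. s n \<le> s (Suc n)" and s0: "\<And>n. 0 \<le> s n"
    and lim: "\<And>q. (\<lambda>m. s (kk (1 + 1 / real (Suc q)) m) / real (kk (1 + 1 / real (Suc q)) m)) \<longlonglongrightarrow> \<mu>"
  shows "(\<lambda>n. s n / real n) \<longlonglongrightarrow> \<mu>"
proof (rule LIMSEQ_I)
  fix \<epsilon> :: real assume e: "0 < \<epsilon>"
  have smono: "m \<le> n \<Longrightarrow> s m \<le> s n" for m n using mono by (rule lift_Suc_mono_le)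
  have mu: "0 \<le> \<mu>"
    by (rule LIMSEQ_le_const[OF lim[of 0]]) (auto intro!: divide_nonneg_nonneg s0)
  define \<gamma> where "\<gamma> = min 1 (\<epsilon> / (2 * (\<mu> + 2)))"
  have g1: "0 < \<gamma>" using e mu unfolding \<gamma>_def by auto
  have g2: "\<gamma> \<le> 1" unfolding \<gamma>_def by auto
  have g3: "\<gamma> * (\<mu> + 2) \<le> \<epsilon> / 2"
  proof -
    have "\<gamma> * (\<mu> + 2) \<le> (\<epsilon> / (2 * (\<mu> + 2))) * (\<mu> + 2)"
      using mu unfolding \<gamma>_def by (intro mult_right_mono) auto
    also have "\<dots> = \<epsilon> / 2" using mu by (simp add: field_simps)
    finally show ?thesis .
  qed
  obtain q where q: "inverse (real (Suc q)) < \<gamma> / 2" using reals_Archimedean[of "\<gamma> / 2"] g1 by auto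
  define a where "a = 1 + 1 / real (Suc q)"
  define \<delta> where "\<delta> = \<gamma> / 2"
  have a: "a > 1" unfolding a_def by simp
  have d1: "0 < \<delta>" "\<delta> \<le> \<gamma>" using g1 unfolding \<delta>_def by auto
  have ad: "a + \<delta> \<le> 1 + \<gamma>" using q unfolding a_def \<delta>_def by (simp add: inverse_eq_divide)
  define k where "k = kk a"
  obtain M0 where M0: "\<And>m. m \<ge> M0 \<Longrightarrow> norm (s (k m) / real (k m) - \<mu>) < \<delta>"
    using LIMSEQ_D[OF lim[of q] d1(1)] unfolding a_def[symmetric] k_def by blast
  obtain M1 where M1: "1 / \<delta> < a ^ M1" using real_arch_pow[OF a] by blast
  define M2 where "M2 = max M0 M1"
  have kpos: "\<And>m. 1 \<le> k m" unfolding k_def using kk_pos[OF a] .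
  have kmono: "\<And>m m'. m \<le> m' \<Longrightarrow> k m \<le> k m'" unfolding k_def using kk_mono[OF a] .
  show "\<exists>N. \<forall>n\<ge>N. norm (s n / real n - \<mu>) < \<epsilon>"
  proof (intro exI[of _ "k M2"] allI impI)
    fix n assume n: "k M2 \<le> n"
    have n1: "1 \<le> n" using n kpos[of M2] by linarith
    have ex: "\<exists>j. n < k j" using kk_unbounded[OF a, of n] unfolding k_def by auto
    define j where "j = (LEAST j. n < k j)"
    have j1: "n < k j" unfolding j_def by (rule LeastI_ex[OF ex])
    have j2: "\<And>i. i < j \<Longrightarrow> k i \<le> n" unfolding j_def using not_less_Least by fastforce
    have j0: "j \<noteq> 0"
    proof
      assume "j = 0"
      then have "n < k 0" using j1 by simp
      thus False using n1 unfolding k_def kk0 by simp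
    qed
    obtain m where jm: "j = Suc m" using j0 not0_implies_Suc by blast
    have km: "k m \<le> n" using j2 jm by simp
    have kSm: "n < k (Suc m)" using j1 jm by simp
    have mM2: "M2 \<le> m"
    proof (rule ccontr)
      assume "\<not> M2 \<le> m"
      then have "Suc m \<le> M2" by simp
      then have "k (Suc m) \<le> k M2" by (rule kmono)
      thus False using n kSm by linarith
    qed
    have L: "norm (s (k m) / real (k m) - \<mu>) < \<delta>" using mM2 unfolding M2_def by (intro M0) simp
    have U: "norm (s (k (Suc m)) / real (k (Suc m)) - \<mu>) < \<delta>" using mM2 unfolding M2_def by (intro M0) simp
    define \<rho> where "\<rho> = real (k (Suc m)) / real (k m)"
    have kmp: "0 < real (k m)" using kpos[of m] by simp
    have kSp: "0 < real (k (Suc m))" using kpos[of "Suc m"] by simp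
    have np: "0 < real n" using n1 by simp
    have r1: "1 \<le> \<rho>" unfolding \<rho>_def using kmono[of m "Suc m"] kmp by simp
    have r2: "\<rho> \<le> 1 + \<gamma>"
    proof -
      have "\<rho> \<le> a + 1 / a ^ m" unfolding \<rho>_def k_def by (rule kk_ratio[OF a])
      also have "1 / a ^ m \<le> 1 / a ^ M1"
        using a mM2 unfolding M2_def by (intro divide_left_mono power_increasing) auto
      also have "1 / a ^ M1 < \<delta>" using M1 d1 a by (simp add: field_simps)
      finally show ?thesis using ad by simp
    qed
    have v1: "s n / real n \<le> (s (k (Suc m)) / real (k (Suc m))) * \<rho>"
    proof -
      have "s n / real n \<le> s (k (Suc m)) / real n"
        using smono[of n "k (Suc m)"] kSm np by (intro divide_right_mono) auto
      also have "\<dots> \<le> s (k (Suc m)) / real (k m)"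
        using km kmp s0 by (intro divide_left_mono) auto
      also have "\<dots> = (s (k (Suc m)) / real (k (Suc m))) * \<rho>"
        unfolding \<rho>_def using kSp kmp by (simp add: field_simps)
      finally show ?thesis .
    qed
    have v2: "(s (k m) / real (k m)) / \<rho> \<le> s n / real n"
    proof -
      have "(s (k m) / real (k m)) / \<rho> = s (k m) / real (k (Suc m))"
        unfolding \<rho>_def using kSp kmp by (simp add: field_simps)
      also have "\<dots> \<le> s (k m) / real n"
        using kSm np s0 by (intro divide_left_mono) auto
      also have "\<dots> \<le> s n / real n"
        using smono[OF km] np by (intro divide_right_mono) auto
      finally show ?thesis .
    qed
    have U0: "0 \<le> s (k (Suc m)) / real (k (Suc m))" using s0 by simp
    have L0: "0 \<le> s (k m) / real (k m)" using s0 by simp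
    show "norm (s n / real n - \<mu>) < \<epsilon>"
      using interp_arith[OF mu g1 g2 g3 d1 r1 r2 U0 _ L0 _ v2 v1 e] U L by auto
  qed
qed




locale iidnn = prob_space +
  fixes X :: "nat \<Rightarrow> 'a \<Rightarrow> real"
  assumes ind: "indep_vars (\<lambda>_. borel) X UNIV"
    and dist: "\<And>t. distr M borel (X t) = distr M borel (X 0)"
    and nn: "\<And>t \<omega>. 0 \<le> X t \<omega>"
    and int0: "integrable M (X 0)"
begin

lemma meas[measurable]: "X t \<in> borel_measurable M"
  using ind unfolding indep_vars_def by auto

lemma law_int:
  fixes h :: "real \<Rightarrow> real"
  assumes [measurable]: "h \<in> borel_measurable borel"
  shows "(\<integral>\<omega>. h (X t \<omega>) \<partial>M) = (\<integral>\<omega>. h (X 0 \<omega>) \<partial>M)"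
proof -
  have "(\<integral>\<omega>. h (X t \<omega>) \<partial>M) = integral\<^sup>L (distr M borel (X t)) h"
    by (rule integral_distr[OF meas assms, symmetric])
  also have "\<dots> = integral\<^sup>L (distr M borel (X 0)) h" by (simp only: dist[of t])
  also have "\<dots> = (\<integral>\<omega>. h (X 0 \<omega>) \<partial>M)" by (rule integral_distr[OF meas assms])
  finally show ?thesis .
qed

lemma law_integrable:
  fixes h :: "real \<Rightarrow> real"
  assumes [measurable]: "h \<in> borel_measurable borel"
  shows "integrable M (\<lambda>\<omega>. h (X t \<omega>)) = integrable M (\<lambda>\<omega>. h (X 0 \<omega>))"
proof -
  have "integrable M (\<lambda>\<omega>. h (X t \<omega>)) = integrable (distr M borel (X t)) h"
    by (rule integrable_distr_eq[OF meas assms, symmetric])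
  also have "\<dots> = integrable (distr M borel (X 0)) h" by (simp only: dist[of t])
  also have "\<dots> = integrable M (\<lambda>\<omega>. h (X 0 \<omega>))" by (rule integrable_distr_eq[OF meas assms])
  finally show ?thesis .
qed

lemma law_prob:
  assumes [measurable]: "A \<in> sets borel"
  shows "prob (X t -` A \<inter> space M) = prob (X 0 -` A \<inter> space M)"
proof -
  have "prob (X t -` A \<inter> space M) = measure (distr M borel (X t)) A"
    by (simp add: measure_distr)
  also have "\<dots> = measure (distr M borel (X 0)) A" by (simp only: dist[of t])
  also have "\<dots> = prob (X 0 -` A \<inter> space M)" by (simp add: measure_distr)
  finally show ?thesis .
qed

definition T :: "nat \<Rightarrow> real \<Rightarrow> real" where
  "T k x = (if x \<le> real (Suc k) then x else 0)"

definition Y :: "nat \<Rightarrow> 'a \<Rightarrow> real" where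
  "Y k \<omega> = T k (X k \<omega>)"

lemma T_meas[measurable]: "T k \<in> borel_measurable borel"
  unfolding T_def by measurable

lemma Y_meas[measurable]: "Y k \<in> borel_measurable M"
  unfolding Y_def by measurable

lemma T_nn: "0 \<le> x \<Longrightarrow> 0 \<le> T k x" unfolding T_def by auto
lemma T_le: "0 \<le> x \<Longrightarrow> T k x \<le> x" unfolding T_def by auto
lemma T_bound: "0 \<le> x \<Longrightarrow> T k x \<le> real (Suc k)" unfolding T_def by auto
lemma Y_nn: "0 \<le> Y k \<omega>" unfolding Y_def using T_nn nn by auto

lemma Y_int: "integrable M (\<lambda>\<omega>. f (Y k \<omega>))" if [measurable]: "f \<in> borel_measurable borel"
  and b: "\<And>x. 0 \<le> x \<Longrightarrow> x \<le> real (Suc k) \<Longrightarrow> \<bar>f x\<bar> \<le> B" for f :: "real \<Rightarrow> real" and B :: real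
proof (rule integrable_const_bound[where B=B])
  show "AE x in M. norm (f (Y k x)) \<le> B"
    using b Y_nn T_bound nn unfolding Y_def by auto
qed measurable

lemma stepA: "AE \<omega> in M. eventually (\<lambda>k. X k \<omega> = Y k \<omega>) sequentially"
proof -
  define A where "A k = X k -` {real (Suc k)<..} \<inter> space M" for k
  have A_sets[measurable]: "A k \<in> sets M" for k unfolding A_def by measurable
  have pA: "prob (A k) = expectation (\<lambda>\<omega>. if X 0 \<omega> > real (Suc k) then 1 else 0)" for k
  proof -
    have "prob (A k) = prob (X 0 -` {real (Suc k)<..} \<inter> space M)"
      unfolding A_def by (rule law_prob) simp
    also have "\<dots> = expectation (indicator (X 0 -` {real (Suc k)<..} \<inter> space M))"
      by simp
    also have "\<dots> = expectation (\<lambda>\<omega>. if X 0 \<omega> > real (Suc k) then 1 else 0)"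
      by (rule Bochner_Integration.integral_cong) (auto simp: indicator_def)
    finally show ?thesis .
  qed
  have sumb: "(\<Sum>k<K. prob (A k)) \<le> expectation (X 0)" for K
  proof -
    have intI: "integrable M (\<lambda>\<omega>. if X 0 \<omega> > c then 1 else (0::real))" for c
      by (rule integrable_const_bound[where B=1]) (simp, measurable)
    have "(\<Sum>k<K. prob (A k)) = expectation (\<lambda>\<omega>. \<Sum>k<K. if X 0 \<omega> > real (Suc k) then 1 else 0)"
      unfolding pA by (subst Bochner_Integration.integral_sum) (auto intro: intI)
    also have "\<dots> \<le> expectation (X 0)"
    proof (rule Bochner_Integration.integral_mono)
      show "integrable M (\<lambda>\<omega>. \<Sum>k<K. if X 0 \<omega> > real (Suc k) then 1 else (0::real))"
        by (rule Bochner_Integration.integrable_sum) (rule intI)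
      show "integrable M (X 0)" by (rule int0)
      fix \<omega> show "(\<Sum>k<K. if X 0 \<omega> > real (Suc k) then 1 else 0) \<le> X 0 \<omega>"
        using count_le[OF nn[of 0 \<omega>], of K] by simp
    qed
    finally show ?thesis .
  qed
  have "summable (\<lambda>k. prob (A k))"
    by (rule summableI_nonneg_bounded[OF _ sumb]) simp
  from borel_cantelli_AE1[OF A_sets _ this]
  have "AE \<omega> in M. eventually (\<lambda>k. \<omega> \<in> space M - A k) sequentially"
    by (simp add: emeasure_eq_measure)
  then show ?thesis
  proof (rule AE_mp[OF _ AE_I2], intro impI)
    fix \<omega> assume "\<omega> \<in> space M" and ev: "eventually (\<lambda>k. \<omega> \<in> space M - A k) sequentially"
    show "eventually (\<lambda>k. X k \<omega> = Y k \<omega>) sequentially"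
      using ev by eventually_elim (auto simp: A_def Y_def T_def)
  qed
qed

definition \<mu> where "\<mu> = expectation (X 0)"

lemma EY: "expectation (Y k) = expectation (\<lambda>\<omega>. T k (X 0 \<omega>))"
  unfolding Y_def by (rule law_int) measurable

lemma stepB: "(\<lambda>k. expectation (Y k)) \<longlonglongrightarrow> \<mu>"
proof -
  have "(\<lambda>k. expectation (\<lambda>\<omega>. T k (X 0 \<omega>))) \<longlonglongrightarrow> expectation (X 0)"
  proof (rule integral_dominated_convergence[where w="X 0"])
    show "AE x in M. (\<lambda>k. T k (X 0 x)) \<longlonglongrightarrow> X 0 x"
    proof (rule AE_I2)
      fix x
      obtain N :: nat where "X 0 x \<le> real N" using real_arch_simple by blast
      hence "eventually (\<lambda>k. T k (X 0 x) = X 0 x) sequentially"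
        unfolding eventually_sequentially T_def by (intro exI[of _ N]) auto
      thus "(\<lambda>k. T k (X 0 x)) \<longlonglongrightarrow> X 0 x" by (rule tendsto_eventually)
    qed
    show "AE x in M. norm (T k (X 0 x)) \<le> X 0 x" for k
      using T_nn T_le nn by auto
  qed (simp_all add: int0)
  thus ?thesis unfolding EY \<mu>_def .
qed

end


lemma psi_meas[measurable]: "psi n \<in> borel_measurable borel" unfolding psi_def by measurable

context iidnn begin

definition S :: "nat \<Rightarrow> 'a \<Rightarrow> real" where "S n \<omega> = (\<Sum>k<n. Y k \<omega>)"
definition ES :: "nat \<Rightarrow> real" where "ES n = (\<Sum>k<n. expectation (Y k))"

lemma S_meas[measurable]: "S n \<in> borel_measurable M" unfolding S_def by measurable

lemma EY_bounds: "0 \<le> expectation (Y k)" "expectation (Y k) \<le> real (Suc k)"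
proof -
  show "0 \<le> expectation (Y k)" by (rule integral_nonneg_AE) (simp add: Y_nn)
  have "expectation (Y k) \<le> expectation (\<lambda>_. real (Suc k))"
  proof (rule Bochner_Integration.integral_mono)
    show "integrable M (Y k)" using Y_int[of "\<lambda>x. x" k "real (Suc k)"] by simp
  qed (use Y_nn T_bound nn in \<open>auto simp: Y_def\<close>)
  thus "expectation (Y k) \<le> real (Suc k)" by (simp add: prob_space)
qed

definition Z :: "nat \<Rightarrow> 'a \<Rightarrow> real" where "Z k \<omega> = Y k \<omega> - expectation (Y k)"

lemma Z_meas[measurable]: "Z k \<in> borel_measurable M" unfolding Z_def by measurable

lemma Z_bound: "\<bar>Z k \<omega>\<bar> \<le> real (Suc k)"
  using EY_bounds[of k] Y_nn[of k \<omega>] T_bound[OF nn[of k \<omega>], of k]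
  unfolding Z_def Y_def by auto

lemma Z_int: "integrable M (Z k)"
proof (rule integrable_const_bound[where B="real (Suc k)"])
  show "AE x in M. norm (Z k x) \<le> real (Suc k)" by (rule AE_I2) (simp only: real_norm_def Z_bound)
qed measurable

lemma ZZ_int: "integrable M (\<lambda>\<omega>. Z k \<omega> * Z l \<omega>)"
proof (rule integrable_const_bound[where B="real (Suc k) * real (Suc l)"])
  show "AE x in M. norm (Z k x * Z l x) \<le> real (Suc k) * real (Suc l)"
    by (rule AE_I2) (simp only: real_norm_def abs_mult, intro mult_mono Z_bound, simp_all)
qed measurable

lemma EZ: "expectation (Z k) = 0"
proof -
  have "integrable M (Y k)" using Y_int[of "\<lambda>x. x" k "real (Suc k)"] by simp
  thus ?thesis unfolding Z_def by (simp add: prob_space)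
qed

lemma Z_indep: "indep_vars (\<lambda>_. borel) Z UNIV"
proof -
  have "indep_vars (\<lambda>_. borel) (\<lambda>k \<omega>. (\<lambda>x. T k x - expectation (Y k)) (X k \<omega>)) UNIV"
    by (rule indep_vars_compose2[OF ind]) measurable
  thus ?thesis unfolding Z_def[abs_def] Y_def[abs_def] by simp
qed

lemma EZZ: "k \<noteq> l \<Longrightarrow> expectation (\<lambda>\<omega>. Z k \<omega> * Z l \<omega>) = 0"
proof -
  assume kl: "k \<noteq> l"
  have ind2: "indep_vars (\<lambda>_. borel) Z {k, l}"
    by (rule indep_vars_subset[OF Z_indep]) auto
  have "expectation (\<lambda>\<omega>. \<Prod>i\<in>{k,l}. Z i \<omega>) = (\<Prod>i\<in>{k,l}. expectation (Z i))"
    by (rule indep_vars_lebesgue_integral[OF _ ind2]) (auto simp: Z_int)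
  thus ?thesis using kl by (simp add: EZ)
qed

lemma EZ2: "expectation (\<lambda>\<omega>. Z k \<omega> * Z k \<omega>) \<le> expectation (\<lambda>\<omega>. (Y k \<omega>)^2)"
proof -
  have iY: "integrable M (Y k)" using Y_int[of "\<lambda>x. x" k "real (Suc k)"] by simp
  have iY2: "integrable M (\<lambda>\<omega>. (Y k \<omega>)^2)"
    using Y_int[of "\<lambda>x. x^2" k "real (Suc k)^2"] by (auto intro: power_mono)
  have "expectation (\<lambda>\<omega>. Z k \<omega> * Z k \<omega>) =
      expectation (\<lambda>\<omega>. (Y k \<omega>)^2 - 2 * expectation (Y k) * Y k \<omega> + (expectation (Y k))^2)"
    unfolding Z_def by (rule Bochner_Integration.integral_cong) (auto simp: power2_eq_square algebra_simps)
  also have "\<dots> = expectation (\<lambda>\<omega>. (Y k \<omega>)^2) - (expectation (Y k))^2"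
    using iY iY2 by (simp add: prob_space power2_eq_square)
  also have "\<dots> \<le> expectation (\<lambda>\<omega>. (Y k \<omega>)^2)" by simp
  finally show ?thesis .
qed

lemma var_bound: "expectation (\<lambda>\<omega>. (S n \<omega> - ES n)^2) \<le> (\<Sum>k<n. expectation (\<lambda>\<omega>. (Y k \<omega>)^2))"
proof -
  have eq: "(S n \<omega> - ES n)^2 = (\<Sum>k<n. \<Sum>l<n. Z k \<omega> * Z l \<omega>)" for \<omega>
  proof -
    have "S n \<omega> - ES n = (\<Sum>k<n. Z k \<omega>)" unfolding S_def ES_def Z_def by (simp add: sum_subtractf)
    thus ?thesis by (simp add: power2_eq_square sum_product)
  qed
  have "expectation (\<lambda>\<omega>. (S n \<omega> - ES n)^2) = (\<Sum>k<n. \<Sum>l<n. expectation (\<lambda>\<omega>. Z k \<omega> * Z l \<omega>))"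
    unfolding eq by (simp add: Bochner_Integration.integral_sum Bochner_Integration.integrable_sum ZZ_int)
  also have "\<dots> = (\<Sum>k<n. expectation (\<lambda>\<omega>. Z k \<omega> * Z k \<omega>))"
  proof (rule sum.cong[OF refl])
    fix k assume "k \<in> {..<n}"
    hence "(\<Sum>l<n. expectation (\<lambda>\<omega>. Z k \<omega> * Z l \<omega>)) = (\<Sum>l\<in>{k}. expectation (\<lambda>\<omega>. Z k \<omega> * Z l \<omega>))"
      by (intro sum.mono_neutral_right) (auto simp: EZZ)
    thus "(\<Sum>l<n. expectation (\<lambda>\<omega>. Z k \<omega> * Z l \<omega>)) = expectation (\<lambda>\<omega>. Z k \<omega> * Z k \<omega>)" by simp
  qed
  also have "\<dots> \<le> (\<Sum>k<n. expectation (\<lambda>\<omega>. (Y k \<omega>)^2))" by (intro sum_mono EZ2)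
  finally show ?thesis .
qed

lemma ES_eq: "expectation (S n) = ES n"
  unfolding S_def[abs_def] ES_def
  by (rule Bochner_Integration.integral_sum) (use Y_int[of "\<lambda>x. x" _ "real (Suc _)"] in auto)

lemma cheb: assumes "a > 0"
  shows "prob {\<omega>\<in>space M. \<bar>S n \<omega> - ES n\<bar> \<ge> a} \<le> (\<Sum>k<n. expectation (\<lambda>\<omega>. (Y k \<omega>)^2)) / a^2"
proof -
  have iS2: "integrable M (\<lambda>\<omega>. (S n \<omega>)^2)"
  proof (rule integrable_const_bound[where B="(\<Sum>k<n. real (Suc k))^2"])
    show "AE x in M. norm ((S n x)^2) \<le> (\<Sum>k<n. real (Suc k))^2"
    proof (rule AE_I2)
      fix x
      have "0 \<le> S n x" unfolding S_def by (auto intro: sum_nonneg Y_nn)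
      moreover have "S n x \<le> (\<Sum>k<n. real (Suc k))" unfolding S_def
        by (intro sum_mono) (use T_bound nn in \<open>auto simp: Y_def\<close>)
      ultimately show "norm ((S n x)^2) \<le> (\<Sum>k<n. real (Suc k))^2" by (simp add: power_mono)
    qed
  qed measurable
  have "prob {\<omega>\<in>space M. \<bar>S n \<omega> - expectation (S n)\<bar> \<ge> a} \<le> variance (S n) / a^2"
    by (rule Chebyshev_inequality[OF _ iS2 assms]) measurable
  also have "\<dots> \<le> (\<Sum>k<n. expectation (\<lambda>\<omega>. (Y k \<omega>)^2)) / a^2"
    using var_bound[of n] assms by (intro divide_right_mono) (auto simp: ES_eq)
  finally show ?thesis by (simp add: ES_eq)
qed


lemma psi_int: "integrable M (\<lambda>\<omega>. psi n (X 0 \<omega>))"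
proof (rule integrable_const_bound[where B="real n ^2"])
  show "AE x in M. norm (psi n (X 0 x)) \<le> real n ^2"
    using nn by (auto simp: psi_def intro: power_mono)
qed measurable

lemma sumY2: "(\<Sum>k<n. expectation (\<lambda>\<omega>. (Y k \<omega>)^2)) \<le> real n * expectation (\<lambda>\<omega>. psi n (X 0 \<omega>))"
proof -
  have e: "expectation (\<lambda>\<omega>. (Y k \<omega>)^2) = expectation (\<lambda>\<omega>. (T k (X 0 \<omega>))^2)" for k
    unfolding Y_def by (rule law_int) measurable
  have iT: "integrable M (\<lambda>\<omega>. (T k (X 0 \<omega>))^2)" for k
  proof (rule integrable_const_bound[where B="real (Suc k)^2"])
    show "AE x in M. norm ((T k (X 0 x))^2) \<le> real (Suc k)^2"
      using T_bound T_nn nn by (auto intro: power_mono)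
  qed measurable
  have "(\<Sum>k<n. expectation (\<lambda>\<omega>. (Y k \<omega>)^2)) = expectation (\<lambda>\<omega>. \<Sum>k<n. (T k (X 0 \<omega>))^2)"
    unfolding e by (rule Bochner_Integration.integral_sum[symmetric]) (use iT in auto)
  also have "\<dots> \<le> expectation (\<lambda>\<omega>. real n * psi n (X 0 \<omega>))"
  proof (rule Bochner_Integration.integral_mono)
    show "integrable M (\<lambda>\<omega>. \<Sum>k<n. (T k (X 0 \<omega>))^2)" by (intro Bochner_Integration.integrable_sum iT)
    show "integrable M (\<lambda>\<omega>. real n * psi n (X 0 \<omega>))" using psi_int by simp
    fix \<omega>
    have "(\<Sum>k<n. (T k (X 0 \<omega>))^2) \<le> (\<Sum>k<n. psi n (X 0 \<omega>))"
    proof (rule sum_mono)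
      fix k assume "k \<in> {..<n}"
      thus "(T k (X 0 \<omega>))^2 \<le> psi n (X 0 \<omega>)"
        unfolding T_def psi_def by auto
    qed
    thus "(\<Sum>k<n. (T k (X 0 \<omega>))^2) \<le> real n * psi n (X 0 \<omega>)" by simp
  qed
  also have "\<dots> = real n * expectation (\<lambda>\<omega>. psi n (X 0 \<omega>))" by simp
  finally show ?thesis .
qed

lemma cheb2: assumes "e > 0" "n > 0"
  shows "prob {\<omega>\<in>space M. \<bar>S n \<omega> - ES n\<bar> \<ge> e * real n} \<le> expectation (\<lambda>\<omega>. psi n (X 0 \<omega>) / real n) / e^2"
proof -
  have "prob {\<omega>\<in>space M. \<bar>S n \<omega> - ES n\<bar> \<ge> e * real n} \<le> (\<Sum>k<n. expectation (\<lambda>\<omega>. (Y k \<omega>)^2)) / (e * real n)^2"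
    using assms by (intro cheb) auto
  also have "\<dots> \<le> real n * expectation (\<lambda>\<omega>. psi n (X 0 \<omega>)) / (e * real n)^2"
    by (intro divide_right_mono sumY2) simp
  also have "\<dots> = expectation (\<lambda>\<omega>. psi n (X 0 \<omega>) / real n) / e^2"
    using assms by (simp add: power2_eq_square field_simps)
  finally show ?thesis .
qed

end


context iidnn begin

lemma ES_lim: "(\<lambda>n. ES n / real n) \<longlonglongrightarrow> \<mu>"
  unfolding ES_def by (rule cesaro[OF stepB])

lemma stepD_eps:
  assumes a: "a > 1" and e: "e > 0"
  shows "AE \<omega> in M. eventually (\<lambda>m. \<bar>S (kk a m) \<omega> - ES (kk a m)\<bar> < e * real (kk a m)) sequentially"
proof -
  define B where "B m = {\<omega>\<in>space M. \<bar>S (kk a m) \<omega> - ES (kk a m)\<bar> \<ge> e * real (kk a m)}" for m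
  have B_sets[measurable]: "B m \<in> sets M" for m unfolding B_def by measurable
  have pB: "prob (B m) \<le> expectation (\<lambda>\<omega>. psi (kk a m) (X 0 \<omega>) / real (kk a m)) / e^2" for m
    unfolding B_def using kk_pos[OF a, of m] e by (intro cheb2) auto
  have ipsi: "integrable M (\<lambda>\<omega>. psi (kk a m) (X 0 \<omega>) / real (kk a m))" for m
    using psi_int by simp
  have sumb: "(\<Sum>m<K. prob (B m)) \<le> expectation (\<lambda>\<omega>. 2 * a / (a - 1) * X 0 \<omega>) / e^2" for K
  proof -
    have "(\<Sum>m<K. prob (B m)) \<le> (\<Sum>m<K. expectation (\<lambda>\<omega>. psi (kk a m) (X 0 \<omega>) / real (kk a m)) / e^2)"
      by (intro sum_mono pB)
    also have "\<dots> = expectation (\<lambda>\<omega>. \<Sum>m<K. psi (kk a m) (X 0 \<omega>) / real (kk a m)) / e^2"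
    proof -
      have sw: "(\<Sum>m<K. expectation (\<lambda>\<omega>. psi (kk a m) (X 0 \<omega>) / real (kk a m)))
          = expectation (\<lambda>\<omega>. \<Sum>m<K. psi (kk a m) (X 0 \<omega>) / real (kk a m))"
        by (rule Bochner_Integration.integral_sum[symmetric]) (rule ipsi)
      show ?thesis by (simp only: sum_divide_distrib[symmetric] sw)
    qed
    also have "\<dots> \<le> expectation (\<lambda>\<omega>. 2 * a / (a - 1) * X 0 \<omega>) / e^2"
    proof (rule divide_right_mono)
      show "expectation (\<lambda>\<omega>. \<Sum>m<K. psi (kk a m) (X 0 \<omega>) / real (kk a m)) \<le> expectation (\<lambda>\<omega>. 2 * a / (a - 1) * X 0 \<omega>)"
      proof (rule Bochner_Integration.integral_mono)
        show "integrable M (\<lambda>\<omega>. \<Sum>m<K. psi (kk a m) (X 0 \<omega>) / real (kk a m))"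
          by (rule Bochner_Integration.integrable_sum) (rule ipsi)
        show "integrable M (\<lambda>\<omega>. 2 * a / (a - 1) * X 0 \<omega>)" using int0 by simp
        fix \<omega> show "(\<Sum>m<K. psi (kk a m) (X 0 \<omega>) / real (kk a m)) \<le> 2 * a / (a - 1) * X 0 \<omega>"
          by (rule psi_sum_bound[OF a nn])
      qed
    qed simp
    finally show ?thesis .
  qed
  have "summable (\<lambda>m. prob (B m))"
    by (rule summableI_nonneg_bounded[OF _ sumb]) simp
  from borel_cantelli_AE1[OF B_sets _ this]
  have "AE \<omega> in M. eventually (\<lambda>m. \<omega> \<in> space M - B m) sequentially"
    by (simp add: emeasure_eq_measure)
  then show ?thesis
  proof (rule AE_mp[OF _ AE_I2], intro impI)
    fix \<omega> assume "\<omega> \<in> space M" and ev: "eventually (\<lambda>m. \<omega> \<in> space M - B m) sequentially"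
    show "eventually (\<lambda>m. \<bar>S (kk a m) \<omega> - ES (kk a m)\<bar> < e * real (kk a m)) sequentially"
      using ev by eventually_elim (auto simp: B_def)
  qed
qed

lemma stepD:
  assumes a: "a > 1"
  shows "AE \<omega> in M. (\<lambda>m. S (kk a m) \<omega> / real (kk a m)) \<longlonglongrightarrow> \<mu>"
proof -
  have "AE \<omega> in M. \<forall>p. eventually (\<lambda>m. \<bar>S (kk a m) \<omega> - ES (kk a m)\<bar> < (1 / real (Suc p)) * real (kk a m)) sequentially"
    unfolding AE_all_countable by (intro allI stepD_eps[OF a]) simp
  then show ?thesis
  proof (rule AE_mp[OF _ AE_I2], intro impI)
    fix \<omega> assume H: "\<forall>p. eventually (\<lambda>m. \<bar>S (kk a m) \<omega> - ES (kk a m)\<bar> < (1 / real (Suc p)) * real (kk a m)) sequentially"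
    have lim1: "(\<lambda>m. ES (kk a m) / real (kk a m)) \<longlonglongrightarrow> \<mu>"
      using filterlim_compose[OF ES_lim kk_filterlim[OF a]] by simp
    have lim2: "(\<lambda>m. S (kk a m) \<omega> / real (kk a m) - ES (kk a m) / real (kk a m)) \<longlonglongrightarrow> 0"
    proof (rule LIMSEQ_I)
      fix r :: real assume r: "0 < r"
      obtain p where p: "inverse (real (Suc p)) < r" using reals_Archimedean[OF r] by blast
      from H[rule_format, of p] obtain N where
        N: "\<And>m. m \<ge> N \<Longrightarrow> \<bar>S (kk a m) \<omega> - ES (kk a m)\<bar> < (1 / real (Suc p)) * real (kk a m)"
        unfolding eventually_sequentially by blast
      show "\<exists>N. \<forall>m\<ge>N. norm (S (kk a m) \<omega> / real (kk a m) - ES (kk a m) / real (kk a m) - 0) < r"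
      proof (intro exI[of _ N] allI impI)
        fix m assume "N \<le> m"
        hence h: "\<bar>S (kk a m) \<omega> - ES (kk a m)\<bar> < (1 / real (Suc p)) * real (kk a m)" by (rule N)
        have kp: "real (kk a m) > 0" using kk_pos[OF a, of m] by simp
        have "\<bar>S (kk a m) \<omega> / real (kk a m) - ES (kk a m) / real (kk a m)\<bar>
              = \<bar>S (kk a m) \<omega> - ES (kk a m)\<bar> / real (kk a m)"
          using kp by (simp add: diff_divide_distrib[symmetric] abs_divide)
        also have "\<dots> < 1 / real (Suc p)" using h kp by (simp add: divide_less_eq)
        also have "\<dots> < r" using p by (simp add: inverse_eq_divide)
        finally show "norm (S (kk a m) \<omega> / real (kk a m) - ES (kk a m) / real (kk a m) - 0) < r" by simp
      qed
    qed
    show "(\<lambda>m. S (kk a m) \<omega> / real (kk a m)) \<longlonglongrightarrow> \<mu>"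
      using tendsto_add[OF lim2 lim1] by simp
  qed
qed

lemma stepE: "AE \<omega> in M. (\<lambda>n. S n \<omega> / real n) \<longlonglongrightarrow> \<mu>"
proof -
  have "AE \<omega> in M. \<forall>q. (\<lambda>m. S (kk (1 + 1 / real (Suc q)) m) \<omega> / real (kk (1 + 1 / real (Suc q)) m)) \<longlonglongrightarrow> \<mu>"
    unfolding AE_all_countable by (intro allI stepD) simp
  then show ?thesis
  proof (rule AE_mp[OF _ AE_I2], intro impI)
    fix \<omega> assume H: "\<forall>q. (\<lambda>m. S (kk (1 + 1 / real (Suc q)) m) \<omega> / real (kk (1 + 1 / real (Suc q)) m)) \<longlonglongrightarrow> \<mu>"
    show "(\<lambda>n. S n \<omega> / real n) \<longlonglongrightarrow> \<mu>"
    proof (rule interp)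
      show "S n \<omega> \<le> S (Suc n) \<omega>" for n unfolding S_def using Y_nn[of n \<omega>] by simp
      show "0 \<le> S n \<omega>" for n unfolding S_def by (auto intro: sum_nonneg Y_nn)
    qed (use H in blast)
  qed
qed

theorem slln_nn: "AE \<omega> in M. (\<lambda>n. (\<Sum>t<n. X t \<omega>) / real n) \<longlonglongrightarrow> expectation (X 0)"
  using stepA stepE
proof (eventually_elim)
  case (elim \<omega>)
  from elim(1) obtain N where N: "\<And>k. k \<ge> N \<Longrightarrow> X k \<omega> = Y k \<omega>"
    unfolding eventually_sequentially by blast
  define c where "c = (\<Sum>k<N. X k \<omega> - Y k \<omega>)"
  have eq: "(\<Sum>t<n. X t \<omega>) = S n \<omega> + c" if "n \<ge> N" for n
  proof -
    have "(\<Sum>t<n. X t \<omega>) - S n \<omega> = (\<Sum>t<n. X t \<omega> - Y t \<omega>)" unfolding S_def by (simp add: sum_subtractf)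
    also have "\<dots> = (\<Sum>t<N. X t \<omega> - Y t \<omega>)"
      using that N by (intro sum.mono_neutral_right) auto
    finally show ?thesis unfolding c_def by simp
  qed
  have "(\<lambda>n. S n \<omega> / real n + c / real n) \<longlonglongrightarrow> \<mu> + 0"
    by (intro tendsto_add elim(2) lim_const_over_n)
  hence lim: "(\<lambda>n. S n \<omega> / real n + c / real n) \<longlonglongrightarrow> \<mu>" by simp
  have "eventually (\<lambda>n. S n \<omega> / real n + c / real n = (\<Sum>t<n. X t \<omega>) / real n) sequentially"
    unfolding eventually_sequentially using eq by (intro exI[of _ N]) (auto simp: add_divide_distrib)
  from tendsto_cong[THEN iffD1, OF this lim] show ?case unfolding \<mu>_def .
qed

end



context prob_space begin

lemma slln:
  fixes X :: "nat \<Rightarrow> 'a \<Rightarrow> real"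
  assumes ind: "indep_vars (\<lambda>_. borel) X UNIV"
    and dist: "\<And>t. distr M borel (X t) = distr M borel (X 0)"
    and int: "integrable M (X 0)"
  shows "AE \<omega> in M. (\<lambda>n. (\<Sum>t<n. X t \<omega>) / real n) \<longlonglongrightarrow> expectation (X 0)"
proof -
  have meas[measurable]: "X t \<in> borel_measurable M" for t using ind unfolding indep_vars_def by auto
  have distf: "distr M borel (\<lambda>\<omega>. f (X t \<omega>)) = distr M borel (\<lambda>\<omega>. f (X 0 \<omega>))"
    if f: "f \<in> borel_measurable borel" for f :: "real \<Rightarrow> real" and t
  proof -
    have "distr M borel (\<lambda>\<omega>. f (X t \<omega>)) = distr (distr M borel (X t)) borel f"
      using distr_distr[OF f meas[of t]] by (simp add: comp_def)
    also have "\<dots> = distr (distr M borel (X 0)) borel f" by (simp only: dist[of t])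
    also have "\<dots> = distr M borel (\<lambda>\<omega>. f (X 0 \<omega>))"
      using distr_distr[OF f meas[of 0]] by (simp add: comp_def)
    finally show ?thesis .
  qed
  have nnI: "iidnn M (\<lambda>t \<omega>. f (X t \<omega>))"
    if f[measurable]: "f \<in> borel_measurable borel" and fnn: "\<And>x. 0 \<le> f x"
      and fi: "integrable M (\<lambda>\<omega>. f (X 0 \<omega>))" for f :: "real \<Rightarrow> real"
  proof (rule iidnn.intro[OF prob_space_axioms], rule iidnn_axioms.intro)
    show "indep_vars (\<lambda>_. borel) (\<lambda>t \<omega>. f (X t \<omega>)) UNIV"
      using indep_vars_compose2[OF ind, of "\<lambda>_. f" "\<lambda>_. borel"] by simp
    show "distr M borel (\<lambda>\<omega>. f (X t \<omega>)) = distr M borel (\<lambda>\<omega>. f (X 0 \<omega>))" for t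
      by (rule distf[OF f])
    show "0 \<le> f (X t \<omega>)" for t \<omega> by (rule fnn)
  qed (rule fi)
  have mp: "(\<lambda>x::real. max x 0) \<in> borel_measurable borel" by measurable
  have mm: "(\<lambda>x::real. max (- x) 0) \<in> borel_measurable borel" by measurable
  have ip: "integrable M (\<lambda>\<omega>. max (X 0 \<omega>) 0)" using int by auto
  have im: "integrable M (\<lambda>\<omega>. max (- X 0 \<omega>) 0)" using int by auto
  have A1: "AE \<omega> in M. (\<lambda>n. (\<Sum>t<n. max (X t \<omega>) 0) / real n) \<longlonglongrightarrow> expectation (\<lambda>\<omega>. max (X 0 \<omega>) 0)"
    using iidnn.slln_nn[OF nnI[OF mp _ ip]] by simp
  have A2: "AE \<omega> in M. (\<lambda>n. (\<Sum>t<n. max (- X t \<omega>) 0) / real n) \<longlonglongrightarrow> expectation (\<lambda>\<omega>. max (- X 0 \<omega>) 0)"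
    using iidnn.slln_nn[OF nnI[OF mm _ im]] by simp
  have E: "expectation (X 0) = expectation (\<lambda>\<omega>. max (X 0 \<omega>) 0) - expectation (\<lambda>\<omega>. max (- X 0 \<omega>) 0)"
  proof -
    have "expectation (X 0) = expectation (\<lambda>\<omega>. max (X 0 \<omega>) 0 - max (- X 0 \<omega>) 0)"
      by (rule Bochner_Integration.integral_cong) auto
    also have "\<dots> = expectation (\<lambda>\<omega>. max (X 0 \<omega>) 0) - expectation (\<lambda>\<omega>. max (- X 0 \<omega>) 0)"
      by (rule Bochner_Integration.integral_diff[OF ip im])
    finally show ?thesis .
  qed
  from A1 A2 show ?thesis
  proof eventually_elim
    case (elim \<omega>)
    have "(\<lambda>n. (\<Sum>t<n. max (X t \<omega>) 0) / real n - (\<Sum>t<n. max (- X t \<omega>) 0) / real n)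
        \<longlonglongrightarrow> expectation (\<lambda>\<omega>. max (X 0 \<omega>) 0) - expectation (\<lambda>\<omega>. max (- X 0 \<omega>) 0)"
      by (rule tendsto_diff[OF elim])
    moreover have "(\<Sum>t<n. max (X t \<omega>) 0) / real n - (\<Sum>t<n. max (- X t \<omega>) 0) / real n
        = (\<Sum>t<n. X t \<omega>) / real n" for n
    proof -
      have "(\<Sum>t<n. max (X t \<omega>) 0) - (\<Sum>t<n. max (- X t \<omega>) 0) = (\<Sum>t<n. X t \<omega>)"
        by (simp only: sum_subtractf[symmetric]) (rule sum.cong, auto)
      thus ?thesis by (simp add: diff_divide_distrib[symmetric])
    qed
    ultimately show ?case unfolding E by simp
  qed
qed

lemma slln_vec:
  fixes V :: "nat \<Rightarrow> 'a \<Rightarrow> 'b" and g :: "'b \<Rightarrow> real"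
  assumes ind: "indep_vars (\<lambda>_. N) V UNIV"
    and dist: "\<And>t. distr M N (V t) = distr M N (V 0)"
    and g: "g \<in> borel_measurable N"
    and int: "integrable M (\<lambda>\<omega>. g (V 0 \<omega>))"
  shows "AE \<omega> in M. (\<lambda>n. (\<Sum>t<n. g (V t \<omega>)) / real n) \<longlonglongrightarrow> expectation (\<lambda>\<omega>. g (V 0 \<omega>))"
proof -
  have meas: "V t \<in> measurable M N" for t using ind unfolding indep_vars_def by auto
  have "AE \<omega> in M. (\<lambda>n. (\<Sum>t<n. (\<lambda>t \<omega>. g (V t \<omega>)) t \<omega>) / real n) \<longlonglongrightarrow> expectation ((\<lambda>t \<omega>. g (V t \<omega>)) 0)"
  proof (rule slln)
    show "indep_vars (\<lambda>_. borel) (\<lambda>t \<omega>. g (V t \<omega>)) UNIV"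
      using indep_vars_compose2[OF ind, of "\<lambda>_. g" "\<lambda>_. borel"] g by simp
    show "distr M borel (\<lambda>\<omega>. g (V t \<omega>)) = distr M borel (\<lambda>\<omega>. g (V 0 \<omega>))" for t
    proof -
      have "distr M borel (\<lambda>\<omega>. g (V t \<omega>)) = distr (distr M N (V t)) borel g"
        using distr_distr[OF g meas[of t]] by (simp add: comp_def)
      also have "\<dots> = distr (distr M N (V 0)) borel g" by (simp only: dist[of t])
      also have "\<dots> = distr M borel (\<lambda>\<omega>. g (V 0 \<omega>))"
        using distr_distr[OF g meas[of 0]] by (simp add: comp_def)
      finally show ?thesis .
    qed
  qed (use int in simp)
  thus ?thesis by simp
qed

lemma abs_mult_le_sq: "\<bar>a * b\<bar> \<le> a^2 + (b::real)^2"
proof -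
  have "\<bar>a\<bar> * \<bar>b\<bar> \<le> \<bar>a\<bar> * \<bar>a\<bar> + \<bar>b\<bar> * \<bar>b\<bar>"
  proof (cases "\<bar>a\<bar> \<le> \<bar>b\<bar>")
    case True
    hence "\<bar>a\<bar> * \<bar>b\<bar> \<le> \<bar>b\<bar> * \<bar>b\<bar>" by (intro mult_right_mono) auto
    thus ?thesis by (smt (verit) zero_le_mult_iff abs_ge_zero)
  next
    case False
    hence "\<bar>a\<bar> * \<bar>b\<bar> \<le> \<bar>a\<bar> * \<bar>a\<bar>" by (intro mult_left_mono) auto
    thus ?thesis by (smt (verit) zero_le_mult_iff abs_ge_zero)
  qed
  thus ?thesis by (simp add: abs_mult power2_eq_square)
qed

lemma sq_int_mult:
  fixes f g :: "'a \<Rightarrow> real"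
  assumes [measurable]: "f \<in> borel_measurable M" "g \<in> borel_measurable M"
    and "integrable M (\<lambda>x. (f x)^2)" "integrable M (\<lambda>x. (g x)^2)"
  shows "integrable M (\<lambda>x. f x * g x)"
proof (rule Bochner_Integration.integrable_bound[where f="\<lambda>x. (f x)^2 + (g x)^2"])
  show "integrable M (\<lambda>x. (f x)^2 + (g x)^2)" using assms by simp
  show "AE x in M. norm (f x * g x) \<le> norm ((f x)^2 + (g x)^2)"
    by (rule AE_I2) (simp add: abs_mult_le_sq)
qed measurable

lemma sq_int_add:
  fixes f g :: "'a \<Rightarrow> real"
  assumes [measurable]: "f \<in> borel_measurable M" "g \<in> borel_measurable M"
    and "integrable M (\<lambda>x. (f x)^2)" "integrable M (\<lambda>x. (g x)^2)"
  shows "integrable M (\<lambda>x. (f x + g x)^2)"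
proof -
  have "integrable M (\<lambda>x. (f x)^2 + 2 * (f x * g x) + (g x)^2)"
    using assms sq_int_mult[OF assms] by simp
  thus ?thesis by (simp add: power2_sum mult.assoc add_ac)
qed

lemma sq_int_sum:
  fixes f :: "'i \<Rightarrow> 'a \<Rightarrow> real"
  assumes "finite I" "\<And>i. i \<in> I \<Longrightarrow> f i \<in> borel_measurable M"
    "\<And>i. i \<in> I \<Longrightarrow> integrable M (\<lambda>x. (f i x)^2)"
  shows "integrable M (\<lambda>x. (\<Sum>i\<in>I. f i x)^2)"
  using assms
proof (induction I rule: finite_induct)
  case empty then show ?case by simp
next
  case (insert i I)
  have m: "(\<lambda>x. \<Sum>i\<in>I. f i x) \<in> borel_measurable M"
    using insert by (intro borel_measurable_sum) auto
  have "integrable M (\<lambda>x. (f i x + (\<Sum>i\<in>I. f i x))^2)"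
    by (rule sq_int_add) (use insert m in auto)
  thus ?case using insert by simp
qed

lemma sq_int_div:
  fixes f :: "'a \<Rightarrow> real"
  assumes "integrable M (\<lambda>x. (f x)^2)"
  shows "integrable M (\<lambda>x. (f x / c)^2)"
  using assms by (simp add: power_divide)

lemma pcov_formula:
  fixes f g :: "'a \<Rightarrow> real"
  assumes [measurable]: "f \<in> borel_measurable M" "g \<in> borel_measurable M"
    and f2: "integrable M (\<lambda>x. (f x)^2)" and g2: "integrable M (\<lambda>x. (g x)^2)"
  shows "pcov M f g = expectation (\<lambda>x. f x * g x) - expectation f * expectation g"
proof -
  have fi: "integrable M f" by (rule square_integrable_imp_integrable) (use f2 in auto)
  have gi: "integrable M g" by (rule square_integrable_imp_integrable) (use g2 in auto)
  have fgi: "integrable M (\<lambda>x. f x * g x)" by (rule sq_int_mult) (use f2 g2 in auto)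
  define a where "a = expectation f"
  define b where "b = expectation g"
  have "pcov M f g = expectation (\<lambda>x. (f x * g x - b * f x) - (a * g x - a * b))"
    unfolding pcov_def a_def[symmetric] b_def[symmetric]
    by (rule Bochner_Integration.integral_cong) (auto simp: algebra_simps)
  also have "\<dots> = expectation (\<lambda>x. f x * g x - b * f x) - expectation (\<lambda>x. a * g x - a * b)"
    by (rule Bochner_Integration.integral_diff) (use fi gi fgi in auto)
  also have "expectation (\<lambda>x. f x * g x - b * f x) = expectation (\<lambda>x. f x * g x) - b * a"
    using fi fgi by (simp add: a_def)
  also have "expectation (\<lambda>x. a * g x - a * b) = a * b - a * b"
    using gi by (simp add: b_def prob_space)
  finally show ?thesis unfolding a_def b_def by (simp add: algebra_simps)
qed

lemma pcov_sym: "pcov M f g = pcov M g f"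
  unfolding pcov_def by (simp add: mult.commute)

end




context prob_space begin

lemma pcov_add2:
  fixes f1 f2 g1 g2 :: "'a \<Rightarrow> real"
  assumes m: "f1 \<in> borel_measurable M" "f2 \<in> borel_measurable M" "g1 \<in> borel_measurable M" "g2 \<in> borel_measurable M"
    and s: "integrable M (\<lambda>x. (f1 x)^2)" "integrable M (\<lambda>x. (f2 x)^2)"
      "integrable M (\<lambda>x. (g1 x)^2)" "integrable M (\<lambda>x. (g2 x)^2)"
  shows "pcov M (\<lambda>x. f1 x + f2 x) (\<lambda>x. g1 x + g2 x) = pcov M f1 g1 + pcov M f1 g2 + pcov M f2 g1 + pcov M f2 g2"
proof -
  have mf: "(\<lambda>x. f1 x + f2 x) \<in> borel_measurable M" "(\<lambda>x. g1 x + g2 x) \<in> borel_measurable M"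
    using m by auto
  have sf: "integrable M (\<lambda>x. (f1 x + f2 x)^2)" "integrable M (\<lambda>x. (g1 x + g2 x)^2)"
    using sq_int_add[OF m(1,2) s(1,2)] sq_int_add[OF m(3,4) s(3,4)] by auto
  have i1: "integrable M f1" by (rule square_integrable_imp_integrable[OF m(1) s(1)])
  have i2: "integrable M f2" by (rule square_integrable_imp_integrable[OF m(2) s(2)])
  have i3: "integrable M g1" by (rule square_integrable_imp_integrable[OF m(3) s(3)])
  have i4: "integrable M g2" by (rule square_integrable_imp_integrable[OF m(4) s(4)])
  have p11: "integrable M (\<lambda>x. f1 x * g1 x)" by (rule sq_int_mult[OF m(1,3) s(1,3)])
  have p12: "integrable M (\<lambda>x. f1 x * g2 x)" by (rule sq_int_mult[OF m(1,4) s(1,4)])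
  have p21: "integrable M (\<lambda>x. f2 x * g1 x)" by (rule sq_int_mult[OF m(2,3) s(2,3)])
  have p22: "integrable M (\<lambda>x. f2 x * g2 x)" by (rule sq_int_mult[OF m(2,4) s(2,4)])
  have e1: "expectation (\<lambda>x. (f1 x + f2 x) * (g1 x + g2 x)) =
      expectation (\<lambda>x. f1 x * g1 x) + expectation (\<lambda>x. f1 x * g2 x) + expectation (\<lambda>x. f2 x * g1 x) + expectation (\<lambda>x. f2 x * g2 x)"
  proof -
    have "expectation (\<lambda>x. (f1 x + f2 x) * (g1 x + g2 x)) =
        expectation (\<lambda>x. f1 x * g1 x + f1 x * g2 x + f2 x * g1 x + f2 x * g2 x)"
      by (rule Bochner_Integration.integral_cong) (auto simp: algebra_simps)
    also have "\<dots> = expectation (\<lambda>x. f1 x * g1 x) + expectation (\<lambda>x. f1 x * g2 x) + expectation (\<lambda>x. f2 x * g1 x) + expectation (\<lambda>x. f2 x * g2 x)"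
      using p11 p12 p21 p22 by simp
    finally show ?thesis .
  qed
  have e2: "expectation (\<lambda>x. f1 x + f2 x) = expectation f1 + expectation f2" using i1 i2 by simp
  have e3: "expectation (\<lambda>x. g1 x + g2 x) = expectation g1 + expectation g2" using i3 i4 by simp
  show ?thesis
    unfolding pcov_formula[OF mf sf] pcov_formula[OF m(1,3) s(1,3)] pcov_formula[OF m(1,4) s(1,4)]
      pcov_formula[OF m(2,3) s(2,3)] pcov_formula[OF m(2,4) s(2,4)] e1 e2 e3
    by (simp add: algebra_simps)
qed

lemma pcov_scale:
  fixes f g :: "'a \<Rightarrow> real"
  shows "pcov M (\<lambda>x. f x / c) (\<lambda>x. g x / d) = pcov M f g / (c * d)"
proof -
  have ef: "expectation (\<lambda>x. f x / c) = expectation f / c" by (rule Bochner_Integration.integral_divide_zero)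
  have eg: "expectation (\<lambda>x. g x / d) = expectation g / d" by (rule Bochner_Integration.integral_divide_zero)
  have "pcov M (\<lambda>x. f x / c) (\<lambda>x. g x / d) =
      (\<integral>x. (f x - expectation f) * (g x - expectation g) / (c * d) \<partial>M)"
    unfolding pcov_def ef eg
    by (rule Bochner_Integration.integral_cong) (simp_all add: diff_divide_distrib[symmetric])
  also have "\<dots> = pcov M f g / (c * d)"
    unfolding pcov_def by (rule Bochner_Integration.integral_divide_zero)
  finally show ?thesis .
qed

lemma pcov_sum:
  fixes f :: "'i \<Rightarrow> 'a \<Rightarrow> real" and g :: "'j \<Rightarrow> 'a \<Rightarrow> real"
  assumes fin: "finite I" "finite J"
    and fm: "\<And>i. i \<in> I \<Longrightarrow> f i \<in> borel_measurable M" and fs: "\<And>i. i \<in> I \<Longrightarrow> integrable M (\<lambda>x. (f i x)^2)"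
    and gm: "\<And>j. j \<in> J \<Longrightarrow> g j \<in> borel_measurable M" and gs: "\<And>j. j \<in> J \<Longrightarrow> integrable M (\<lambda>x. (g j x)^2)"
  shows "pcov M (\<lambda>x. \<Sum>i\<in>I. f i x) (\<lambda>x. \<Sum>j\<in>J. g j x) = (\<Sum>i\<in>I. \<Sum>j\<in>J. pcov M (f i) (g j))"
proof -
  have fi: "integrable M (f i)" if "i \<in> I" for i
    by (rule square_integrable_imp_integrable[OF fm[OF that] fs[OF that]])
  have gi: "integrable M (g j)" if "j \<in> J" for j
    by (rule square_integrable_imp_integrable[OF gm[OF that] gs[OF that]])
  have fgi: "integrable M (\<lambda>x. f i x * g j x)" if "i \<in> I" "j \<in> J" for i j
    by (rule sq_int_mult[OF fm[OF that(1)] gm[OF that(2)] fs[OF that(1)] gs[OF that(2)]])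
  have mF: "(\<lambda>x. \<Sum>i\<in>I. f i x) \<in> borel_measurable M" using fm by (rule borel_measurable_sum)
  have mG: "(\<lambda>x. \<Sum>j\<in>J. g j x) \<in> borel_measurable M" using gm by (rule borel_measurable_sum)
  have sF: "integrable M (\<lambda>x. (\<Sum>i\<in>I. f i x)^2)" by (rule sq_int_sum[OF fin(1) fm fs])
  have sG: "integrable M (\<lambda>x. (\<Sum>j\<in>J. g j x)^2)" by (rule sq_int_sum[OF fin(2) gm gs])
  have e1: "expectation (\<lambda>x. (\<Sum>i\<in>I. f i x) * (\<Sum>j\<in>J. g j x)) = (\<Sum>i\<in>I. \<Sum>j\<in>J. expectation (\<lambda>x. f i x * g j x))"
  proof -
    have "expectation (\<lambda>x. (\<Sum>i\<in>I. f i x) * (\<Sum>j\<in>J. g j x)) = expectation (\<lambda>x. \<Sum>i\<in>I. \<Sum>j\<in>J. f i x * g j x)"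
      by (simp add: sum_product)
    also have "\<dots> = (\<Sum>i\<in>I. expectation (\<lambda>x. \<Sum>j\<in>J. f i x * g j x))"
      by (rule Bochner_Integration.integral_sum) (rule Bochner_Integration.integrable_sum, rule fgi)
    also have "\<dots> = (\<Sum>i\<in>I. \<Sum>j\<in>J. expectation (\<lambda>x. f i x * g j x))"
      by (intro sum.cong refl Bochner_Integration.integral_sum fgi)
    finally show ?thesis .
  qed
  have e2: "expectation (\<lambda>x. \<Sum>i\<in>I. f i x) = (\<Sum>i\<in>I. expectation (f i))"
    by (rule Bochner_Integration.integral_sum) (rule fi)
  have e3: "expectation (\<lambda>x. \<Sum>j\<in>J. g j x) = (\<Sum>j\<in>J. expectation (g j))"
    by (rule Bochner_Integration.integral_sum) (rule gi)
  have "pcov M (\<lambda>x. \<Sum>i\<in>I. f i x) (\<lambda>x. \<Sum>j\<in>J. g j x)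
      = (\<Sum>i\<in>I. \<Sum>j\<in>J. expectation (\<lambda>x. f i x * g j x)) - (\<Sum>i\<in>I. \<Sum>j\<in>J. expectation (f i) * expectation (g j))"
    unfolding pcov_formula[OF mF mG sF sG] e1 e2 e3 by (simp add: sum_product)
  also have "\<dots> = (\<Sum>i\<in>I. \<Sum>j\<in>J. expectation (\<lambda>x. f i x * g j x) - expectation (f i) * expectation (g j))"
    by (simp add: sum_subtractf)
  also have "\<dots> = (\<Sum>i\<in>I. \<Sum>j\<in>J. pcov M (f i) (g j))"
    by (intro sum.cong refl pcov_formula[symmetric] fm gm fs gs)
  finally show ?thesis .
qed

lemma pcov_self_nonneg: "0 \<le> pcov M f f"
  unfolding pcov_def by (rule integral_nonneg_AE) auto

end

lemma scov_eq:
  assumes n: "n > 0"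
  shows "scov n a b = (\<Sum>t<n. a t * b t) / real n - smean n a * smean n b"
proof -
  define A where "A = smean n a"
  define B where "B = smean n b"
  have sa: "(\<Sum>t<n. a t) = real n * A" unfolding A_def smean_def using n by simp
  have sb: "(\<Sum>t<n. b t) = real n * B" unfolding B_def smean_def using n by simp
  have "(\<Sum>t<n. (a t - A) * (b t - B)) = (\<Sum>t<n. a t * b t) - B * (\<Sum>t<n. a t) - A * (\<Sum>t<n. b t) + real n * A * B"
    by (simp add: algebra_simps sum.distrib sum_subtractf sum_distrib_left sum_distrib_right)
  also have "\<dots> = (\<Sum>t<n. a t * b t) - real n * A * B" unfolding sa sb by (simp add: algebra_simps)
  finally have "(\<Sum>t<n. (a t - A) * (b t - B)) = (\<Sum>t<n. a t * b t) - real n * A * B" .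
  thus ?thesis unfolding scov_def A_def[symmetric] B_def[symmetric] using n by (simp add: field_simps)
qed

lemma svar_scov: "svar n a = scov n a a"
  unfolding svar_def scov_def by (simp add: power2_eq_square)

lemma scor_eq:
  assumes n: "n > 0"
  shows "scor n a b = ((\<Sum>t<n. a t * b t) / real n - (\<Sum>t<n. a t) / real n * ((\<Sum>t<n. b t) / real n)) /
     sqrt (((\<Sum>t<n. a t * a t) / real n - (\<Sum>t<n. a t) / real n * ((\<Sum>t<n. a t) / real n)) *
           ((\<Sum>t<n. b t * b t) / real n - (\<Sum>t<n. b t) / real n * ((\<Sum>t<n. b t) / real n)))"
  unfolding scor_def svar_scov scov_eq[OF n] smean_def ..

lemma svar_const:
  assumes "\<And>t. a t = c"
  shows "svar n a = 0"
proof (cases "n = 0")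
  case True thus ?thesis unfolding svar_def by simp
next
  case False
  hence "smean n a = c" unfolding smean_def using assms by simp
  thus ?thesis unfolding svar_def using assms by simp
qed


theorem theorem2:
  fixes M :: "'a measure"
    and NA NB :: nat
    and XA eA XB eB :: "nat \<Rightarrow> nat \<Rightarrow> 'a \<Rightarrow> real"  \<comment> \<open>time t, voxel index, outcome\<close>
    and \<sigma>A \<sigma>B \<gamma>A \<gamma>B \<rho> :: real
    and \<eta>A \<eta>B :: "nat \<Rightarrow> nat \<Rightarrow> real"
    and \<nu>A \<nu>B :: "nat set"
  defines "YA \<equiv> \<lambda>t i \<omega>. XA t i \<omega> + eA t i \<omega>"
      and "YB \<equiv> \<lambda>t j \<omega>. XB t j \<omega> + eB t j \<omega>"
  assumes prob: "prob_space M"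
    and rv: "\<And>t i. i < NA \<Longrightarrow> XA t i \<in> borel_measurable M \<and> eA t i \<in> borel_measurable M"
    and rvB: "\<And>t j. j < NB \<Longrightarrow> XB t j \<in> borel_measurable M \<and> eB t j \<in> borel_measurable M"
    and sq: "\<And>t i. i < NA \<Longrightarrow> integrable M (\<lambda>\<omega>. (XA t i \<omega>)^2) \<and> integrable M (\<lambda>\<omega>. (eA t i \<omega>)^2)"
    and sqB: "\<And>t j. j < NB \<Longrightarrow> integrable M (\<lambda>\<omega>. (XB t j \<omega>)^2) \<and> integrable M (\<lambda>\<omega>. (eB t j \<omega>)^2)"
    and \<sigma>A_pos: "\<sigma>A > 0" and \<sigma>B_pos: "\<sigma>B > 0"
    and varXA: "\<And>t i. i < NA \<Longrightarrow> pvar M (XA t i) = \<sigma>A^2"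
    and varXB: "\<And>t j. j < NB \<Longrightarrow> pvar M (XB t j) = \<sigma>B^2"
    and vareA: "\<And>t i. i < NA \<Longrightarrow> pvar M (eA t i) = \<gamma>A^2"
    and vareB: "\<And>t j. j < NB \<Longrightarrow> pvar M (eB t j) = \<gamma>B^2"
    and unc_eAeA: "\<And>t i i'. i < NA \<Longrightarrow> i' < NA \<Longrightarrow> i \<noteq> i' \<Longrightarrow> pcov M (eA t i) (eA t i') = 0"
    and unc_eBeB: "\<And>t j j'. j < NB \<Longrightarrow> j' < NB \<Longrightarrow> j \<noteq> j' \<Longrightarrow> pcov M (eB t j) (eB t j') = 0"
    and unc_eAeB: "\<And>t i j. i < NA \<Longrightarrow> j < NB \<Longrightarrow> pcov M (eA t i) (eB t j) = 0"
    and unc_eAXA: "\<And>t i i'. i < NA \<Longrightarrow> i' < NA \<Longrightarrow> pcov M (eA t i) (XA t i') = 0"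
    and unc_eAXB: "\<And>t i j. i < NA \<Longrightarrow> j < NB \<Longrightarrow> pcov M (eA t i) (XB t j) = 0"
    and unc_eBXA: "\<And>t i j. i < NA \<Longrightarrow> j < NB \<Longrightarrow> pcov M (eB t j) (XA t i) = 0"
    and unc_eBXB: "\<And>t j j'. j < NB \<Longrightarrow> j' < NB \<Longrightarrow> pcov M (eB t j) (XB t j') = 0"
    and etaA: "\<And>t i i'. i < NA \<Longrightarrow> i' < NA \<Longrightarrow> pcor M (XA t i) (XA t i') = \<eta>A i i'"
    and etaB: "\<And>t j j'. j < NB \<Longrightarrow> j' < NB \<Longrightarrow> pcor M (XB t j) (XB t j') = \<eta>B j j'"
    and corAB: "\<And>t i j. i < NA \<Longrightarrow> j < NB \<Longrightarrow> pcor M (XA t i) (XB t j) = \<rho>"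
    and indep: "prob_space.indep_vars M (\<lambda>_. PiM ({..<NA} <+> {..<NB}) (\<lambda>_. borel))
                  (\<lambda>t. obsvec NA NB (YA t) (YB t)) UNIV"
    and ident: "\<And>t. distr M (PiM ({..<NA} <+> {..<NB}) (\<lambda>_. borel)) (obsvec NA NB (YA t) (YB t))
                    = distr M (PiM ({..<NA} <+> {..<NB}) (\<lambda>_. borel)) (obsvec NA NB (YA 0) (YB 0))"
    and \<nu>A: "\<nu>A \<subseteq> {..<NA}" "\<nu>A \<noteq> {}"
    and \<nu>B: "\<nu>B \<subseteq> {..<NB}" "\<nu>B \<noteq> {}"
  shows "AE \<omega> in M.
     (\<lambda>n. scor n (\<lambda>t. (\<Sum>i\<in>\<nu>A. YA t i \<omega>) / real (card \<nu>A))
                  (\<lambda>t. (\<Sum>j\<in>\<nu>B. YB t j \<omega>) / real (card \<nu>B)))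
     \<longlonglongrightarrow> \<rho> / sqrt (((\<Sum>i\<in>\<nu>A. \<Sum>i'\<in>\<nu>A. \<eta>A i i') / real (card \<nu>A)^2
                        + \<gamma>A^2 / (real (card \<nu>A) * \<sigma>A^2))
                     * ((\<Sum>j\<in>\<nu>B. \<Sum>j'\<in>\<nu>B. \<eta>B j j') / real (card \<nu>B)^2
                        + \<gamma>B^2 / (real (card \<nu>B) * \<sigma>B^2)))"
proof -
  interpret prob_space M by (rule prob)
  define cA where "cA = real (card \<nu>A)"
  define cB where "cB = real (card \<nu>B)"
  have finA: "finite \<nu>A" using \<nu>A(1) finite_subset by blast
  have finB: "finite \<nu>B" using \<nu>B(1) finite_subset by blast
  have cA_pos: "cA > 0" using finA \<nu>A(2) unfolding cA_def by (simp add: card_gt_0_iff)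
  have cB_pos: "cB > 0" using finB \<nu>B(2) unfolding cB_def by (simp add: card_gt_0_iff)
  define I where "I = {..<NA} <+> {..<NB}"
  define P where "P = PiM I (\<lambda>_. (borel :: real measure))"
  define V where "V t = obsvec NA NB (YA t) (YB t)" for t
  have indV: "indep_vars (\<lambda>_. P) V UNIV"
    using indep unfolding P_def I_def V_def[abs_def] .
  have distV: "distr M P (V t) = distr M P (V 0)" for t
    using ident[of t] unfolding P_def I_def V_def .
  have Vm: "V t \<in> measurable M P" for t using indV unfolding indep_vars_def by auto
  define a where "a t \<omega> = (\<Sum>i\<in>\<nu>A. YA t i \<omega>) / real (card \<nu>A)" for t \<omega>
  define b where "b t \<omega> = (\<Sum>j\<in>\<nu>B. YB t j \<omega>) / real (card \<nu>B)" for t \<omega>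
  define gA where "gA v = (\<Sum>i\<in>\<nu>A. v (Inl i)) / real (card \<nu>A)" for v :: "nat + nat \<Rightarrow> real"
  define gB where "gB v = (\<Sum>j\<in>\<nu>B. v (Inr j)) / real (card \<nu>B)" for v :: "nat + nat \<Rightarrow> real"
  have gA_V: "gA (V t \<omega>) = a t \<omega>" for t \<omega>
    unfolding gA_def a_def V_def obsvec_def using \<nu>A(1)
    by (intro arg_cong2[where f="(/)"] sum.cong refl) auto
  have gB_V: "gB (V t \<omega>) = b t \<omega>" for t \<omega>
    unfolding gB_def b_def V_def obsvec_def using \<nu>B(1)
    by (intro arg_cong2[where f="(/)"] sum.cong refl) auto
  have compA: "(\<lambda>v. v (Inl i)) \<in> borel_measurable P" if "i \<in> \<nu>A" for i
    unfolding P_def by (rule measurable_component_singleton) (use that \<nu>A(1) I_def in auto)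
  have compB: "(\<lambda>v. v (Inr j)) \<in> borel_measurable P" if "j \<in> \<nu>B" for j
    unfolding P_def by (rule measurable_component_singleton) (use that \<nu>B(1) I_def in auto)
  have gAm[measurable]: "gA \<in> borel_measurable P"
    unfolding gA_def by (intro borel_measurable_divide borel_measurable_sum compA) auto
  have gBm[measurable]: "gB \<in> borel_measurable P"
    unfolding gB_def by (intro borel_measurable_divide borel_measurable_sum compB) auto
  have YAm: "YA t i \<in> borel_measurable M" if "i < NA" for t i
    unfolding YA_def using rv[OF that, of t] by auto
  have YBm: "YB t j \<in> borel_measurable M" if "j < NB" for t j
    unfolding YB_def using rvB[OF that, of t] by auto
  have YAs: "integrable M (\<lambda>\<omega>. (YA t i \<omega>)^2)" if "i < NA" for t i
    unfolding YA_def using rv[OF that, of t] sq[OF that, of t] by (intro sq_int_add) auto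
  have YBs: "integrable M (\<lambda>\<omega>. (YB t j \<omega>)^2)" if "j < NB" for t j
    unfolding YB_def using rvB[OF that, of t] sqB[OF that, of t] by (intro sq_int_add) auto
  have am: "a t \<in> borel_measurable M" for t
    unfolding a_def[abs_def] using YAm \<nu>A(1) by (intro borel_measurable_divide borel_measurable_sum) auto
  have bm: "b t \<in> borel_measurable M" for t
    unfolding b_def[abs_def] using YBm \<nu>B(1) by (intro borel_measurable_divide borel_measurable_sum) auto
  have as: "integrable M (\<lambda>\<omega>. (a t \<omega>)^2)" for t
    unfolding a_def using YAm YAs \<nu>A(1) by (intro sq_int_div sq_int_sum finA) auto
  have bs: "integrable M (\<lambda>\<omega>. (b t \<omega>)^2)" for t
    unfolding b_def using YBm YBs \<nu>B(1) by (intro sq_int_div sq_int_sum finB) auto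
  have ai: "integrable M (a t)" for t by (rule square_integrable_imp_integrable[OF am as])
  have bi: "integrable M (b t)" for t by (rule square_integrable_imp_integrable[OF bm bs])
  have aai: "integrable M (\<lambda>\<omega>. a t \<omega> * a t \<omega>)" for t by (rule sq_int_mult[OF am am as as])
  have bbi: "integrable M (\<lambda>\<omega>. b t \<omega> * b t \<omega>)" for t by (rule sq_int_mult[OF bm bm bs bs])
  have abi: "integrable M (\<lambda>\<omega>. a t \<omega> * b t \<omega>)" for t by (rule sq_int_mult[OF am bm as bs])

  have SL: "AE \<omega> in M. (\<lambda>n. (\<Sum>t<n. g (V t \<omega>)) / real n) \<longlonglongrightarrow> expectation (\<lambda>\<omega>. g (V 0 \<omega>))"
    if "g \<in> borel_measurable P" "integrable M (\<lambda>\<omega>. g (V 0 \<omega>))" for g :: "(nat + nat \<Rightarrow> real) \<Rightarrow> real"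
    apply (rule slln_vec[where V=V and g=g and N=P])
    apply (rule indV)
    apply (rule distV)
    apply (rule that(1))
    apply (rule that(2))
    done
  have L1: "AE \<omega> in M. (\<lambda>n. (\<Sum>t<n. a t \<omega>) / real n) \<longlonglongrightarrow> expectation (a 0)"
    using SL[of gA] ai[of 0] by (simp add: gA_V)
  have L2: "AE \<omega> in M. (\<lambda>n. (\<Sum>t<n. b t \<omega>) / real n) \<longlonglongrightarrow> expectation (b 0)"
    using SL[of gB] bi[of 0] by (simp add: gB_V)
  have L3: "AE \<omega> in M. (\<lambda>n. (\<Sum>t<n. a t \<omega> * a t \<omega>) / real n) \<longlonglongrightarrow> expectation (\<lambda>\<omega>. a 0 \<omega> * a 0 \<omega>)"
    using SL[of "\<lambda>v. gA v * gA v"] aai[of 0] by (simp add: gA_V)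
  have L4: "AE \<omega> in M. (\<lambda>n. (\<Sum>t<n. b t \<omega> * b t \<omega>) / real n) \<longlonglongrightarrow> expectation (\<lambda>\<omega>. b 0 \<omega> * b 0 \<omega>)"
    using SL[of "\<lambda>v. gB v * gB v"] bbi[of 0] by (simp add: gB_V)
  have L5: "AE \<omega> in M. (\<lambda>n. (\<Sum>t<n. a t \<omega> * b t \<omega>) / real n) \<longlonglongrightarrow> expectation (\<lambda>\<omega>. a 0 \<omega> * b 0 \<omega>)"
    using SL[of "\<lambda>v. gA v * gB v"] abi[of 0] by (simp add: gA_V gB_V)

  have sA2: "sqrt (\<sigma>A^2 * \<sigma>A^2) = \<sigma>A^2" by (subst real_sqrt_abs2) simp
  have sB2: "sqrt (\<sigma>B^2 * \<sigma>B^2) = \<sigma>B^2" by (subst real_sqrt_abs2) simp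
  have sAB: "sqrt (\<sigma>A^2 * \<sigma>B^2) = \<sigma>A * \<sigma>B" using \<sigma>A_pos \<sigma>B_pos by (simp add: real_sqrt_mult)
  have pXAXA: "pcov M (XA 0 i) (XA 0 i') = \<eta>A i i' * \<sigma>A^2" if "i < NA" "i' < NA" for i i'
  proof -
    have "pcov M (XA 0 i) (XA 0 i') / \<sigma>A^2 = \<eta>A i i'"
      using etaA[OF that, of 0] unfolding pcor_def varXA[OF that(1)] varXA[OF that(2)] sA2 .
    thus ?thesis using \<sigma>A_pos by (simp add: field_simps)
  qed
  have pXBXB: "pcov M (XB 0 j) (XB 0 j') = \<eta>B j j' * \<sigma>B^2" if "j < NB" "j' < NB" for j j'
  proof -
    have "pcov M (XB 0 j) (XB 0 j') / \<sigma>B^2 = \<eta>B j j'"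
      using etaB[OF that, of 0] unfolding pcor_def varXB[OF that(1)] varXB[OF that(2)] sB2 .
    thus ?thesis using \<sigma>B_pos by (simp add: field_simps)
  qed
  have pXAXB: "pcov M (XA 0 i) (XB 0 j) = \<rho> * (\<sigma>A * \<sigma>B)" if "i < NA" "j < NB" for i j
  proof -
    have "pcov M (XA 0 i) (XB 0 j) / (\<sigma>A * \<sigma>B) = \<rho>"
      using corAB[OF that, of 0] unfolding pcor_def varXA[OF that(1)] varXB[OF that(2)] sAB .
    thus ?thesis using \<sigma>A_pos \<sigma>B_pos by (simp add: field_simps)
  qed
  have pYAYA: "pcov M (YA 0 i) (YA 0 i') = \<eta>A i i' * \<sigma>A^2 + (if i = i' then \<gamma>A^2 else 0)"
    if "i < NA" "i' < NA" for i i'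
  proof -
    have "pcov M (YA 0 i) (YA 0 i') = pcov M (XA 0 i) (XA 0 i') + pcov M (XA 0 i) (eA 0 i')
        + pcov M (eA 0 i) (XA 0 i') + pcov M (eA 0 i) (eA 0 i')"
      unfolding YA_def using rv[OF that(1), of 0] rv[OF that(2), of 0] sq[OF that(1), of 0] sq[OF that(2), of 0]
      by (intro pcov_add2) auto
    also have "pcov M (XA 0 i) (eA 0 i') = 0" using unc_eAXA[OF that(2) that(1), of 0] by (simp add: pcov_sym)
    also have "pcov M (eA 0 i) (XA 0 i') = 0" using unc_eAXA[OF that(1) that(2), of 0] .
    also have "pcov M (eA 0 i) (eA 0 i') = (if i = i' then \<gamma>A^2 else 0)"
      using vareA[OF that(1), of 0] unc_eAeA[OF that, of 0] unfolding pvar_def by auto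
    finally show ?thesis using pXAXA[OF that] by simp
  qed
  have pYBYB: "pcov M (YB 0 j) (YB 0 j') = \<eta>B j j' * \<sigma>B^2 + (if j = j' then \<gamma>B^2 else 0)"
    if "j < NB" "j' < NB" for j j'
  proof -
    have "pcov M (YB 0 j) (YB 0 j') = pcov M (XB 0 j) (XB 0 j') + pcov M (XB 0 j) (eB 0 j')
        + pcov M (eB 0 j) (XB 0 j') + pcov M (eB 0 j) (eB 0 j')"
      unfolding YB_def using rvB[OF that(1), of 0] rvB[OF that(2), of 0] sqB[OF that(1), of 0] sqB[OF that(2), of 0]
      by (intro pcov_add2) auto
    also have "pcov M (XB 0 j) (eB 0 j') = 0" using unc_eBXB[OF that(2) that(1), of 0] by (simp add: pcov_sym)
    also have "pcov M (eB 0 j) (XB 0 j') = 0" using unc_eBXB[OF that(1) that(2), of 0] .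
    also have "pcov M (eB 0 j) (eB 0 j') = (if j = j' then \<gamma>B^2 else 0)"
      using vareB[OF that(1), of 0] unc_eBeB[OF that, of 0] unfolding pvar_def by auto
    finally show ?thesis using pXBXB[OF that] by simp
  qed
  have pYAYB: "pcov M (YA 0 i) (YB 0 j) = \<rho> * (\<sigma>A * \<sigma>B)" if "i < NA" "j < NB" for i j
  proof -
    have "pcov M (YA 0 i) (YB 0 j) = pcov M (XA 0 i) (XB 0 j) + pcov M (XA 0 i) (eB 0 j)
        + pcov M (eA 0 i) (XB 0 j) + pcov M (eA 0 i) (eB 0 j)"
      unfolding YA_def YB_def using rv[OF that(1), of 0] rvB[OF that(2), of 0] sq[OF that(1), of 0] sqB[OF that(2), of 0]
      by (intro pcov_add2) auto
    also have "pcov M (XA 0 i) (eB 0 j) = 0" using unc_eBXA[OF that, of 0] by (simp add: pcov_sym)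
    also have "pcov M (eA 0 i) (XB 0 j) = 0" using unc_eAXB[OF that, of 0] .
    also have "pcov M (eA 0 i) (eB 0 j) = 0" using unc_eAeB[OF that, of 0] .
    finally show ?thesis using pXAXB[OF that] by simp
  qed
  have a0: "a 0 = (\<lambda>\<omega>. (\<Sum>i\<in>\<nu>A. YA 0 i \<omega>) / cA)" unfolding a_def[abs_def] cA_def ..
  have b0: "b 0 = (\<lambda>\<omega>. (\<Sum>j\<in>\<nu>B. YB 0 j \<omega>) / cB)" unfolding b_def[abs_def] cB_def ..
  define BA where "BA = (\<Sum>i\<in>\<nu>A. \<Sum>i'\<in>\<nu>A. \<eta>A i i') / real (card \<nu>A)^2 + \<gamma>A^2 / (real (card \<nu>A) * \<sigma>A^2)"
  define BB where "BB = (\<Sum>j\<in>\<nu>B. \<Sum>j'\<in>\<nu>B. \<eta>B j j') / real (card \<nu>B)^2 + \<gamma>B^2 / (real (card \<nu>B) * \<sigma>B^2)"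
  have CAB: "pcov M (a 0) (b 0) = \<rho> * (\<sigma>A * \<sigma>B)"
  proof -
    have "pcov M (a 0) (b 0) = pcov M (\<lambda>\<omega>. \<Sum>i\<in>\<nu>A. YA 0 i \<omega>) (\<lambda>\<omega>. \<Sum>j\<in>\<nu>B. YB 0 j \<omega>) / (cA * cB)"
      unfolding a0 b0 by (rule pcov_scale)
    also have "pcov M (\<lambda>\<omega>. \<Sum>i\<in>\<nu>A. YA 0 i \<omega>) (\<lambda>\<omega>. \<Sum>j\<in>\<nu>B. YB 0 j \<omega>) = (\<Sum>i\<in>\<nu>A. \<Sum>j\<in>\<nu>B. pcov M (YA 0 i) (YB 0 j))"
      using \<nu>A(1) \<nu>B(1) by (intro pcov_sum finA finB YAm YBm YAs YBs) auto
    also have "\<dots> = (\<Sum>i\<in>\<nu>A. \<Sum>j\<in>\<nu>B. \<rho> * (\<sigma>A * \<sigma>B))"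
      using \<nu>A(1) \<nu>B(1) by (intro sum.cong refl pYAYB) auto
    also have "\<dots> = cA * cB * (\<rho> * (\<sigma>A * \<sigma>B))" unfolding cA_def cB_def by simp
    finally show ?thesis using cA_pos cB_pos by simp
  qed
  have VA: "pcov M (a 0) (a 0) = \<sigma>A^2 * BA"
  proof -
    have "pcov M (a 0) (a 0) = pcov M (\<lambda>\<omega>. \<Sum>i\<in>\<nu>A. YA 0 i \<omega>) (\<lambda>\<omega>. \<Sum>i\<in>\<nu>A. YA 0 i \<omega>) / (cA * cA)"
      unfolding a0 by (rule pcov_scale)
    also have "pcov M (\<lambda>\<omega>. \<Sum>i\<in>\<nu>A. YA 0 i \<omega>) (\<lambda>\<omega>. \<Sum>i\<in>\<nu>A. YA 0 i \<omega>) = (\<Sum>i\<in>\<nu>A. \<Sum>i'\<in>\<nu>A. pcov M (YA 0 i) (YA 0 i'))"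
      using \<nu>A(1) by (intro pcov_sum finA YAm YAs) auto
    also have "\<dots> = (\<Sum>i\<in>\<nu>A. \<Sum>i'\<in>\<nu>A. \<eta>A i i' * \<sigma>A^2 + (if i = i' then \<gamma>A^2 else 0))"
      using \<nu>A(1) by (intro sum.cong refl pYAYA) auto
    also have "\<dots> = \<sigma>A^2 * (\<Sum>i\<in>\<nu>A. \<Sum>i'\<in>\<nu>A. \<eta>A i i') + cA * \<gamma>A^2"
      using finA unfolding cA_def by (simp add: sum.distrib sum_distrib_left sum_distrib_right mult.commute)
    finally show ?thesis unfolding BA_def cA_def[symmetric] using cA_pos \<sigma>A_pos
      by (simp add: field_simps power2_eq_square)
  qed
  have VB: "pcov M (b 0) (b 0) = \<sigma>B^2 * BB"
  proof -
    have "pcov M (b 0) (b 0) = pcov M (\<lambda>\<omega>. \<Sum>j\<in>\<nu>B. YB 0 j \<omega>) (\<lambda>\<omega>. \<Sum>j\<in>\<nu>B. YB 0 j \<omega>) / (cB * cB)"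
      unfolding b0 by (rule pcov_scale)
    also have "pcov M (\<lambda>\<omega>. \<Sum>j\<in>\<nu>B. YB 0 j \<omega>) (\<lambda>\<omega>. \<Sum>j\<in>\<nu>B. YB 0 j \<omega>) = (\<Sum>j\<in>\<nu>B. \<Sum>j'\<in>\<nu>B. pcov M (YB 0 j) (YB 0 j'))"
      using \<nu>B(1) by (intro pcov_sum finB YBm YBs) auto
    also have "\<dots> = (\<Sum>j\<in>\<nu>B. \<Sum>j'\<in>\<nu>B. \<eta>B j j' * \<sigma>B^2 + (if j = j' then \<gamma>B^2 else 0))"
      using \<nu>B(1) by (intro sum.cong refl pYBYB) auto
    also have "\<dots> = \<sigma>B^2 * (\<Sum>j\<in>\<nu>B. \<Sum>j'\<in>\<nu>B. \<eta>B j j') + cB * \<gamma>B^2"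
      using finB unfolding cB_def by (simp add: sum.distrib sum_distrib_left sum_distrib_right mult.commute)
    finally show ?thesis unfolding BB_def cB_def[symmetric] using cB_pos \<sigma>B_pos
      by (simp add: field_simps power2_eq_square)
  qed
  have BA0: "0 \<le> BA" using VA pcov_self_nonneg[of "a 0"] \<sigma>A_pos by (simp add: zero_le_mult_iff)
  have BB0: "0 \<le> BB" using VB pcov_self_nonneg[of "b 0"] \<sigma>B_pos by (simp add: zero_le_mult_iff)
  have fA: "pcov M (a 0) (a 0) = expectation (\<lambda>\<omega>. a 0 \<omega> * a 0 \<omega>) - expectation (a 0) * expectation (a 0)"
    by (rule pcov_formula[OF am am as as])
  have fB: "pcov M (b 0) (b 0) = expectation (\<lambda>\<omega>. b 0 \<omega> * b 0 \<omega>) - expectation (b 0) * expectation (b 0)"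
    by (rule pcov_formula[OF bm bm bs bs])
  have fAB: "pcov M (a 0) (b 0) = expectation (\<lambda>\<omega>. a 0 \<omega> * b 0 \<omega>) - expectation (a 0) * expectation (b 0)"
    by (rule pcov_formula[OF am bm as bs])

  have const: "AE \<omega> in M. \<forall>t. g (V t \<omega>) = c"
    if gm: "g \<in> borel_measurable P" and ci: "integrable M (\<lambda>\<omega>. (g (V 0 \<omega>) - c)^2)"
      and z: "expectation (\<lambda>\<omega>. (g (V 0 \<omega>) - c)^2) = 0" for g :: "(nat + nat \<Rightarrow> real) \<Rightarrow> real" and c :: real
  proof -
    have AE0: "AE \<omega> in M. (g (V 0 \<omega>) - c)^2 = 0"
      using integral_nonneg_eq_0_iff_AE[OF ci] z by auto
    have Sm: "V t -` {v \<in> space P. g v \<noteq> c} \<inter> space M \<in> sets M" for t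
      using Vm[of t] gm by measurable
    have Sc: "{v \<in> space P. g v \<noteq> c} \<in> sets P" using gm by measurable
    have eq: "{\<omega> \<in> space M. \<not> g (V t \<omega>) = c} = V t -` {v \<in> space P. g v \<noteq> c} \<inter> space M" for t
      using Vm[of t] by (auto simp: measurable_def)
    have "emeasure M (V 0 -` {v \<in> space P. g v \<noteq> c} \<inter> space M) = 0"
    proof -
      have "AE \<omega> in M. g (V 0 \<omega>) = c" using AE0 by simp
      thus ?thesis using AE_iff_measurable[OF Sm[of 0] eq[of 0]] by simp
    qed
    hence "emeasure M (V t -` {v \<in> space P. g v \<noteq> c} \<inter> space M) = 0" for t
    proof -
      assume h: "emeasure M (V 0 -` {v \<in> space P. g v \<noteq> c} \<inter> space M) = 0"
      have "emeasure M (V t -` {v \<in> space P. g v \<noteq> c} \<inter> space M) = emeasure (distr M P (V t)) {v \<in> space P. g v \<noteq> c}"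
        by (rule emeasure_distr[OF Vm Sc, symmetric])
      also have "\<dots> = emeasure (distr M P (V 0)) {v \<in> space P. g v \<noteq> c}" by (simp only: distV[of t])
      also have "\<dots> = emeasure M (V 0 -` {v \<in> space P. g v \<noteq> c} \<inter> space M)"
        by (rule emeasure_distr[OF Vm Sc])
      finally show ?thesis using h by simp
    qed
    hence "AE \<omega> in M. g (V t \<omega>) = c" for t
      using AE_iff_measurable[OF Sm[of t] eq[of t]] by simp
    thus ?thesis by (simp add: AE_all_countable)
  qed
  have a_sq: "(\<lambda>\<omega>. (a 0 \<omega> - expectation (a 0))^2) = (\<lambda>\<omega>. (a 0 \<omega> - expectation (a 0)) * (a 0 \<omega> - expectation (a 0)))"
    by (simp add: power2_eq_square)

  have target_eq: "\<rho> / sqrt (BA * BB) = (expectation (\<lambda>\<omega>. a 0 \<omega> * b 0 \<omega>) - expectation (a 0) * expectation (b 0)) /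
       sqrt ((expectation (\<lambda>\<omega>. a 0 \<omega> * a 0 \<omega>) - expectation (a 0) * expectation (a 0)) *
             (expectation (\<lambda>\<omega>. b 0 \<omega> * b 0 \<omega>) - expectation (b 0) * expectation (b 0)))"
  proof -
    have "sqrt ((\<sigma>A^2 * BA) * (\<sigma>B^2 * BB)) = (\<sigma>A * \<sigma>B) * sqrt (BA * BB)"
      using \<sigma>A_pos \<sigma>B_pos by (simp add: real_sqrt_mult power2_eq_square mult_ac)
    thus ?thesis unfolding fA[symmetric] fB[symmetric] fAB[symmetric] CAB VA VB
      using \<sigma>A_pos \<sigma>B_pos by simp
  qed

  have main: "AE \<omega> in M. (\<lambda>n. scor n (\<lambda>t. a t \<omega>) (\<lambda>t. b t \<omega>)) \<longlonglongrightarrow> \<rho> / sqrt (BA * BB)"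
  proof (cases "BA * BB = 0")
    case False
    hence pos: "BA * BB > 0" using BA0 BB0 by simp
    from L1 L2 L3 L4 L5 show ?thesis
    proof eventually_elim
      case (elim \<omega>)
      let ?mA = "\<lambda>n. (\<Sum>t<n. a t \<omega>) / real n"
      let ?mB = "\<lambda>n. (\<Sum>t<n. b t \<omega>) / real n"
      let ?mAA = "\<lambda>n. (\<Sum>t<n. a t \<omega> * a t \<omega>) / real n"
      let ?mBB = "\<lambda>n. (\<Sum>t<n. b t \<omega> * b t \<omega>) / real n"
      let ?mAB = "\<lambda>n. (\<Sum>t<n. a t \<omega> * b t \<omega>) / real n"
      have den: "sqrt ((expectation (\<lambda>\<omega>. a 0 \<omega> * a 0 \<omega>) - expectation (a 0) * expectation (a 0)) *
             (expectation (\<lambda>\<omega>. b 0 \<omega> * b 0 \<omega>) - expectation (b 0) * expectation (b 0))) \<noteq> 0"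
        unfolding fA[symmetric] fB[symmetric] VA VB using pos \<sigma>A_pos \<sigma>B_pos by (simp add: mult_eq_0_iff) (metis mult_zero_left mult_zero_right less_irrefl)
      have lim: "(\<lambda>n. (?mAB n - ?mA n * ?mB n) / sqrt ((?mAA n - ?mA n * ?mA n) * (?mBB n - ?mB n * ?mB n)))
          \<longlonglongrightarrow> \<rho> / sqrt (BA * BB)"
        unfolding target_eq
        by (intro tendsto_divide tendsto_diff tendsto_mult tendsto_real_sqrt elim den)
      have ev: "eventually (\<lambda>n. (?mAB n - ?mA n * ?mB n) / sqrt ((?mAA n - ?mA n * ?mA n) * (?mBB n - ?mB n * ?mB n))
          = scor n (\<lambda>t. a t \<omega>) (\<lambda>t. b t \<omega>)) sequentially"
        unfolding eventually_sequentially
        by (intro exI[of _ 1] allI impI, subst scor_eq) auto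
      show ?case using tendsto_cong[THEN iffD1, OF ev lim] .
    qed
  next
    case True
    hence t0: "\<rho> / sqrt (BA * BB) = 0" by simp
    have "BA = 0 \<or> BB = 0" using True by simp
    thus ?thesis
    proof
      assume "BA = 0"
      hence z: "expectation (\<lambda>\<omega>. (gA (V 0 \<omega>) - expectation (a 0))^2) = 0"
        using VA unfolding pcov_def gA_V a_sq by simp
      have ci: "integrable M (\<lambda>\<omega>. (gA (V 0 \<omega>) - expectation (a 0))^2)"
        unfolding gA_V using sq_int_add[OF am[of 0] _ as[of 0], of "\<lambda>_. - expectation (a 0)"] by simp
      have "AE \<omega> in M. \<forall>t. gA (V t \<omega>) = expectation (a 0)"
        by (rule const[OF gAm ci z])
      thus ?thesis
      proof eventually_elim
        case (elim \<omega>)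
        have "svar n (\<lambda>t. a t \<omega>) = 0" for n using elim by (intro svar_const) (simp add: gA_V)
        hence "scor n (\<lambda>t. a t \<omega>) (\<lambda>t. b t \<omega>) = 0" for n unfolding scor_def by simp
        thus ?case unfolding t0 by simp
      qed
    next
      assume "BB = 0"
      hence z: "expectation (\<lambda>\<omega>. (gB (V 0 \<omega>) - expectation (b 0))^2) = 0"
        using VB unfolding pcov_def gB_V by (simp add: power2_eq_square)
      have ci: "integrable M (\<lambda>\<omega>. (gB (V 0 \<omega>) - expectation (b 0))^2)"
        unfolding gB_V using sq_int_add[OF bm[of 0] _ bs[of 0], of "\<lambda>_. - expectation (b 0)"] by simp
      have "AE \<omega> in M. \<forall>t. gB (V t \<omega>) = expectation (b 0)"
        by (rule const[OF gBm ci z])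
      thus ?thesis
      proof eventually_elim
        case (elim \<omega>)
        have "svar n (\<lambda>t. b t \<omega>) = 0" for n using elim by (intro svar_const) (simp add: gB_V)
        hence "scor n (\<lambda>t. a t \<omega>) (\<lambda>t. b t \<omega>) = 0" for n unfolding scor_def by simp
        thus ?case unfolding t0 by simp
      qed
    qed
  qed
  show ?thesis using main unfolding a_def b_def BA_def BB_def .
qed

end
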